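(* Assume (A1) and (A4). Let $\alpha>0$, $x,v\in\mathbb{R}^n$, and a $b$-tuple $\mathcal S=(\kappa(1),\dots,\kappa(b))$ of elements of $[N]$ be given. For $\xi=(\xi_1,\dots,\xi_b)\in\mathbb{R}^{m_{\mathcal S}}$ define $z(\xi)=x-\alpha\mathcal A_{\mathcal S}^\top\xi+v$ and $$\mathcal U(\xi)=\sum_{j=1}^b\hat f^\ast_{\kappa(j)}(\xi_j)+\frac{b}{2\alpha}\|z(\xi)\|^2-\frac{b}{\alpha}\operatorname{env}_{\alpha\phi}(z(\xi)).$$ Then $\mathcal U$ is $\mu_\ast$-strongly convex on $\mathcal E:=\prod_{j=1}^b\operatorname{dom}(\hat f^\ast_{\kappa(j)})$, and $\nabla\mathcal U(\xi)=\mathcal V(\xi)$ for all $\xi\in\mathcal D$.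
   Context: Setting: $f(x)=\frac1N\sum_{i=1}^N f_i(A_ix)$, $A_i\in\mathbb{R}^{m_i\times n}$, $f_i:\mathbb{R}^{m_i}\to\mathbb{R}$ continuously differentiable; $\phi:\mathbb{R}^n\to(-\infty,\infty]$ proper closed convex. (A1): each $f_i$ is $L_i$-smooth and $\gamma_i$-weakly convex. (A4): each $\hat f_i^\ast$ is essentially differentiable with locally Lipschitz gradient on $\mathcal D_i:=\operatorname{int}(\operatorname{dom}\hat f_i^\ast)\ne\emptyset$, where $\hat f_i(z)=f_i(z)+\frac{\gamma_i}{2}\|z\|^2$ and $\hat f_i^\ast$ is its convex conjugate. $\mu_\ast:=\min_{i\in[N]}1/(L_i+\gamma_i)$. $\operatorname{prox}_g(y)=\operatorname{argmin}_z g(z)+\frac12\|y-z\|^2$ and $\operatorname{env}_g(y)=\min_z g(z)+\frac12\|y-z\|^2$. For the tuple: $m_{\mathcal S}=\sum_j m_{\kappa(j)}$, $\mathcal D=\prod_j\mathcal D_{\kappa(j)}$, $\mathcal A_{\mathcal S}=\frac1b(A_{\kappa(1)}^\top,\dots,A_{\kappa(b)}^\top)^\top$, and $\mathcal V=(\mathcal V_1,\dots,\mathcal V_b)$ with $\mathcal V_j(\xi)=\nabla\hat f^\ast_{\kappa(j)}(\xi_j)-A_{\kappa(j)}\operatorname{prox}_{\alpha\phi}(x-\alpha\mathcal A_{\mathcal S}^\top\xi+v)$. *)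

theory Defs
  imports "HOL-Analysis.Analysis"
begin

text \<open>Euclidean spaces of varying dimension are represented concretely:
  a vector indexed by a finite index set I is a function 'a => real vanishing
  outside I.  R^k is the case I = {..<k}; the stacked space R^{m_S} is the
  case I = {(j,r). j < b, r < m (kappa j)} (block j is r |-> xi (j,r)).\<close>

definition vecs :: "'a set \<Rightarrow> ('a \<Rightarrow> real) set" where
  "vecs I = {v. \<forall>a. a \<notin> I \<longrightarrow> v a = 0}"

definition ip :: "'a set \<Rightarrow> ('a \<Rightarrow> real) \<Rightarrow> ('a \<Rightarrow> real) \<Rightarrow> real" where
  "ip I u w = (\<Sum>a\<in>I. u a * w a)"

definition nrm :: "'a set \<Rightarrow> ('a \<Rightarrow> real) \<Rightarrow> real" where
  "nrm I u = L2_set u I"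

definition vsub :: "('a \<Rightarrow> real) \<Rightarrow> ('a \<Rightarrow> real) \<Rightarrow> ('a \<Rightarrow> real)" where
  "vsub u w = (\<lambda>a. u a - w a)"

definition has_grad :: "'a set \<Rightarrow> (('a \<Rightarrow> real) \<Rightarrow> real) \<Rightarrow> ('a \<Rightarrow> real) \<Rightarrow> ('a \<Rightarrow> real) \<Rightarrow> bool" where
  "has_grad I f g y \<longleftrightarrow> g \<in> vecs I \<and>
     (\<forall>e>0. \<exists>d>0. \<forall>z\<in>vecs I. nrm I (vsub z y) < d \<longrightarrow>
        \<bar>f z - f y - ip I g (vsub z y)\<bar> \<le> e * nrm I (vsub z y))"

definition grad :: "'a set \<Rightarrow> (('a \<Rightarrow> real) \<Rightarrow> real) \<Rightarrow> ('a \<Rightarrow> real) \<Rightarrow> ('a \<Rightarrow> real)" where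
  "grad I f y = (SOME g. has_grad I f g y)"

definition convex_fn :: "('a \<Rightarrow> real) set \<Rightarrow> (('a \<Rightarrow> real) \<Rightarrow> ereal) \<Rightarrow> bool" where
  "convex_fn E h \<longleftrightarrow> (\<forall>x\<in>E. \<forall>y\<in>E. \<forall>t::real. 0 \<le> t \<and> t \<le> 1 \<longrightarrow>
      h (\<lambda>a. t * x a + (1 - t) * y a) \<le> ereal t * h x + ereal (1 - t) * h y)"

definition strongly_convex_on :: "'a set \<Rightarrow> ('a \<Rightarrow> real) set \<Rightarrow> real \<Rightarrow> (('a \<Rightarrow> real) \<Rightarrow> real) \<Rightarrow> bool" where
  "strongly_convex_on I E \<mu> h \<longleftrightarrow> convex_fn E (\<lambda>\<xi>. ereal (h \<xi> - \<mu> / 2 * (nrm I \<xi>)\<^sup>2))"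

definition lsmooth :: "'a set \<Rightarrow> real \<Rightarrow> (('a \<Rightarrow> real) \<Rightarrow> real) \<Rightarrow> bool" where
  "lsmooth I L f \<longleftrightarrow> (\<forall>y\<in>vecs I. \<exists>g. has_grad I f g y) \<and>
     (\<forall>y\<in>vecs I. \<forall>z\<in>vecs I. nrm I (vsub (grad I f y) (grad I f z)) \<le> L * nrm I (vsub y z))"

definition fhat :: "'a set \<Rightarrow> real \<Rightarrow> (('a \<Rightarrow> real) \<Rightarrow> real) \<Rightarrow> ('a \<Rightarrow> real) \<Rightarrow> real" where
  "fhat I \<gamma> f = (\<lambda>z. f z + \<gamma> / 2 * (nrm I z)\<^sup>2)"

definition weakly_convex :: "'a set \<Rightarrow> real \<Rightarrow> (('a \<Rightarrow> real) \<Rightarrow> real) \<Rightarrow> bool" where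
  "weakly_convex I \<gamma> f \<longleftrightarrow> \<gamma> \<ge> 0 \<and> convex_fn (vecs I) (\<lambda>z. ereal (fhat I \<gamma> f z))"

definition conj :: "'a set \<Rightarrow> (('a \<Rightarrow> real) \<Rightarrow> real) \<Rightarrow> ('a \<Rightarrow> real) \<Rightarrow> ereal" where
  "conj I h y = (SUP z\<in>vecs I. ereal (ip I y z - h z))"

definition edom :: "'a set \<Rightarrow> (('a \<Rightarrow> real) \<Rightarrow> ereal) \<Rightarrow> ('a \<Rightarrow> real) set" where
  "edom I h = {y \<in> vecs I. h y < \<infinity>}"

definition rint :: "'a set \<Rightarrow> ('a \<Rightarrow> real) set \<Rightarrow> ('a \<Rightarrow> real) set" where
  "rint I S = {y \<in> S. \<exists>r>0. \<forall>z\<in>vecs I. nrm I (vsub z y) < r \<longrightarrow> z \<in> S}"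

definition egrad :: "'a set \<Rightarrow> (('a \<Rightarrow> real) \<Rightarrow> ereal) \<Rightarrow> ('a \<Rightarrow> real) \<Rightarrow> ('a \<Rightarrow> real)" where
  "egrad I h y = grad I (\<lambda>z. real_of_ereal (h z)) y"

definition ess_diff :: "'a set \<Rightarrow> (('a \<Rightarrow> real) \<Rightarrow> ereal) \<Rightarrow> bool" where
  "ess_diff I h \<longleftrightarrow> rint I (edom I h) \<noteq> {} \<and>
     (\<forall>y\<in>rint I (edom I h). \<exists>g. has_grad I (\<lambda>z. real_of_ereal (h z)) g y) \<and>
     (\<forall>u y0. (\<forall>k. u k \<in> rint I (edom I h)) \<and> y0 \<in> vecs I \<and> y0 \<notin> rint I (edom I h) \<and>
        (\<lambda>k. nrm I (vsub (u k) y0)) \<longlonglongrightarrow> 0 \<longrightarrow>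
        filterlim (\<lambda>k. nrm I (egrad I h (u k))) at_top sequentially)"

definition loc_lip_grad :: "'a set \<Rightarrow> (('a \<Rightarrow> real) \<Rightarrow> ereal) \<Rightarrow> ('a \<Rightarrow> real) set \<Rightarrow> bool" where
  "loc_lip_grad I h D \<longleftrightarrow> (\<forall>y\<in>D. \<exists>r>0. \<exists>K. \<forall>z\<in>D. \<forall>w\<in>D.
      nrm I (vsub z y) < r \<and> nrm I (vsub w y) < r \<longrightarrow>
      nrm I (vsub (egrad I h z) (egrad I h w)) \<le> K * nrm I (vsub z w))"

definition proper_closed_convex :: "'a set \<Rightarrow> (('a \<Rightarrow> real) \<Rightarrow> ereal) \<Rightarrow> bool" where
  "proper_closed_convex I \<phi> \<longleftrightarrow> (\<forall>x\<in>vecs I. \<phi> x \<noteq> -\<infinity>) \<and> (\<exists>x\<in>vecs I. \<phi> x \<noteq> \<infinity>) \<and>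
     convex_fn (vecs I) \<phi> \<and>
     (\<forall>u y. (\<forall>k. u k \<in> vecs I) \<and> y \<in> vecs I \<and> (\<lambda>k. nrm I (vsub (u k) y)) \<longlonglongrightarrow> 0 \<longrightarrow>
        \<phi> y \<le> liminf (\<lambda>k. \<phi> (u k)))"

definition env :: "'a set \<Rightarrow> (('a \<Rightarrow> real) \<Rightarrow> ereal) \<Rightarrow> ('a \<Rightarrow> real) \<Rightarrow> ereal" where
  "env I g y = (INF z\<in>vecs I. g z + ereal ((nrm I (vsub y z))\<^sup>2 / 2))"

definition prox :: "'a set \<Rightarrow> (('a \<Rightarrow> real) \<Rightarrow> ereal) \<Rightarrow> ('a \<Rightarrow> real) \<Rightarrow> ('a \<Rightarrow> real)" where
  "prox I g y = (THE p. p \<in> vecs I \<and> (\<forall>z\<in>vecs I.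
      g p + ereal ((nrm I (vsub y p))\<^sup>2 / 2) \<le> g z + ereal ((nrm I (vsub y z))\<^sup>2 / 2)))"

definition fstar :: "(nat \<Rightarrow> nat) \<Rightarrow> (nat \<Rightarrow> real) \<Rightarrow> (nat \<Rightarrow> (nat \<Rightarrow> real) \<Rightarrow> real) \<Rightarrow> nat \<Rightarrow> (nat \<Rightarrow> real) \<Rightarrow> ereal" where
  "fstar m \<gamma> f i = conj {..<m i} (fhat {..<m i} (\<gamma> i) (f i))"

definition blkI :: "(nat \<Rightarrow> nat) \<Rightarrow> (nat \<Rightarrow> nat) \<Rightarrow> nat \<Rightarrow> (nat \<times> nat) set" where
  "blkI m \<kappa> b = {(j, r). j < b \<and> r < m (\<kappa> j)}"

definition blk :: "(nat \<times> nat \<Rightarrow> real) \<Rightarrow> nat \<Rightarrow> (nat \<Rightarrow> real)" where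
  "blk \<xi> j = (\<lambda>r. \<xi> (j, r))"

definition matv :: "nat \<Rightarrow> nat \<Rightarrow> (nat \<Rightarrow> nat \<Rightarrow> real) \<Rightarrow> (nat \<Rightarrow> real) \<Rightarrow> (nat \<Rightarrow> real)" where
  "matv mm n M y = (\<lambda>r. if r < mm then (\<Sum>c<n. M r c * y c) else 0)"

definition ASt :: "nat \<Rightarrow> (nat \<Rightarrow> nat) \<Rightarrow> (nat \<Rightarrow> nat \<Rightarrow> nat \<Rightarrow> real) \<Rightarrow> (nat \<Rightarrow> nat) \<Rightarrow> nat
    \<Rightarrow> (nat \<times> nat \<Rightarrow> real) \<Rightarrow> (nat \<Rightarrow> real)" where
  "ASt n m A \<kappa> b \<xi> = (\<lambda>c. if c < n then
      (1 / real b) * (\<Sum>j<b. \<Sum>r<m (\<kappa> j). A (\<kappa> j) r c * \<xi> (j, r)) else 0)"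

definition zS :: "nat \<Rightarrow> (nat \<Rightarrow> nat) \<Rightarrow> (nat \<Rightarrow> nat \<Rightarrow> nat \<Rightarrow> real) \<Rightarrow> (nat \<Rightarrow> nat) \<Rightarrow> nat \<Rightarrow> real
    \<Rightarrow> (nat \<Rightarrow> real) \<Rightarrow> (nat \<Rightarrow> real) \<Rightarrow> (nat \<times> nat \<Rightarrow> real) \<Rightarrow> (nat \<Rightarrow> real)" where
  "zS n m A \<kappa> b \<alpha> x v \<xi> = (\<lambda>c. x c - \<alpha> * ASt n m A \<kappa> b \<xi> c + v c)"

definition US :: "nat \<Rightarrow> (nat \<Rightarrow> nat) \<Rightarrow> (nat \<Rightarrow> nat \<Rightarrow> nat \<Rightarrow> real) \<Rightarrow> (nat \<Rightarrow> (nat \<Rightarrow> real) \<Rightarrow> real)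
    \<Rightarrow> (nat \<Rightarrow> real) \<Rightarrow> ((nat \<Rightarrow> real) \<Rightarrow> ereal) \<Rightarrow> (nat \<Rightarrow> nat) \<Rightarrow> nat \<Rightarrow> real
    \<Rightarrow> (nat \<Rightarrow> real) \<Rightarrow> (nat \<Rightarrow> real) \<Rightarrow> (nat \<times> nat \<Rightarrow> real) \<Rightarrow> real" where
  "US n m A f \<gamma> \<phi> \<kappa> b \<alpha> x v \<xi> =
     (\<Sum>j<b. real_of_ereal (fstar m \<gamma> f (\<kappa> j) (blk \<xi> j)))
     + real b / (2 * \<alpha>) * (nrm {..<n} (zS n m A \<kappa> b \<alpha> x v \<xi>))\<^sup>2
     - real b / \<alpha> * real_of_ereal (env {..<n} (\<lambda>w. ereal \<alpha> * \<phi> w) (zS n m A \<kappa> b \<alpha> x v \<xi>))"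

definition VS :: "nat \<Rightarrow> (nat \<Rightarrow> nat) \<Rightarrow> (nat \<Rightarrow> nat \<Rightarrow> nat \<Rightarrow> real) \<Rightarrow> (nat \<Rightarrow> (nat \<Rightarrow> real) \<Rightarrow> real)
    \<Rightarrow> (nat \<Rightarrow> real) \<Rightarrow> ((nat \<Rightarrow> real) \<Rightarrow> ereal) \<Rightarrow> (nat \<Rightarrow> nat) \<Rightarrow> nat \<Rightarrow> real
    \<Rightarrow> (nat \<Rightarrow> real) \<Rightarrow> (nat \<Rightarrow> real) \<Rightarrow> (nat \<times> nat \<Rightarrow> real) \<Rightarrow> (nat \<times> nat \<Rightarrow> real)" where
  "VS n m A f \<gamma> \<phi> \<kappa> b \<alpha> x v \<xi> = (\<lambda>(j, r). if j < b \<and> r < m (\<kappa> j) then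
      egrad {..<m (\<kappa> j)} (fstar m \<gamma> f (\<kappa> j)) (blk \<xi> j) r
      - matv (m (\<kappa> j)) n (A (\<kappa> j))
          (prox {..<n} (\<lambda>w. ereal \<alpha> * \<phi> w) (zS n m A \<kappa> b \<alpha> x v \<xi>)) r
      else 0)"

end

theory Submission
  imports Defs
begin



lemma nrm_sq: "finite I \<Longrightarrow> (nrm I u)\<^sup>2 = (\<Sum>a\<in>I. (u a)\<^sup>2)"
  unfolding nrm_def L2_set_def by (simp add: sum_nonneg)

lemma nrm_nonneg[simp]: "0 \<le> nrm I u"
  unfolding nrm_def by simp

lemma ip_cs: "ip I u w \<le> nrm I u * nrm I w"
proof -
  have "ip I u w \<le> (\<Sum>a\<in>I. \<bar>u a\<bar> * \<bar>w a\<bar>)"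
    unfolding ip_def by (rule sum_mono) (simp add: abs_mult[symmetric])
  also have "\<dots> \<le> nrm I u * nrm I w" unfolding nrm_def by (rule L2_set_mult_ineq)
  finally show ?thesis .
qed

lemma ip_cs_abs: "\<bar>ip I u w\<bar> \<le> nrm I u * nrm I w"
proof -
  have "\<bar>ip I u w\<bar> \<le> (\<Sum>a\<in>I. \<bar>u a\<bar> * \<bar>w a\<bar>)"
    unfolding ip_def by (rule order_trans[OF sum_abs]) (simp add: abs_mult)
  also have "\<dots> \<le> nrm I u * nrm I w" unfolding nrm_def by (rule L2_set_mult_ineq)
  finally show ?thesis .
qed

lemma nrm_scale: "nrm I (\<lambda>a. c * u a) = \<bar>c\<bar> * nrm I u"
  unfolding nrm_def L2_set_def
  by (simp add: power_mult_distrib sum_distrib_left[symmetric] real_sqrt_mult)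

lemma nrm_add: "nrm I (\<lambda>a. u a + w a) \<le> nrm I u + nrm I w"
  unfolding nrm_def by (rule L2_set_triangle_ineq)

lemma abs_le_nrm: "finite I \<Longrightarrow> a \<in> I \<Longrightarrow> \<bar>u a\<bar> \<le> nrm I u"
proof -
  assume "finite I" "a \<in> I"
  hence "(u a)\<^sup>2 \<le> (\<Sum>x\<in>I. (u x)\<^sup>2)" by (intro member_le_sum) auto
  hence "sqrt ((u a)\<^sup>2) \<le> sqrt (\<Sum>x\<in>I. (u x)\<^sup>2)" by (rule real_sqrt_le_mono)
  thus ?thesis unfolding nrm_def L2_set_def by simp
qed

lemma vecs_eqI: "finite I \<Longrightarrow> u \<in> vecs I \<Longrightarrow> w \<in> vecs I \<Longrightarrow> nrm I (vsub u w) = 0 \<Longrightarrow> u = w"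
proof
  fix a assume "finite I" "u \<in> vecs I" "w \<in> vecs I" "nrm I (vsub u w) = 0"
  thus "u a = w a" unfolding nrm_def vecs_def vsub_def
    by (cases "a \<in> I") (auto simp: L2_set_eq_0_iff)
qed

lemma ip_scale_right: "ip I g (\<lambda>a. c * d a) = c * ip I g d"
  unfolding ip_def by (simp add: sum_distrib_left algebra_simps)

lemma ip_diff_left: "ip I (vsub g h) d = ip I g d - ip I h d"
  unfolding ip_def vsub_def by (simp add: sum_subtractf algebra_simps)

lemma vecs_lin: "u \<in> vecs I \<Longrightarrow> w \<in> vecs I \<Longrightarrow> (\<lambda>a. s * u a + t * w a) \<in> vecs I"
  unfolding vecs_def by auto

lemma vsub_vecs: "u \<in> vecs I \<Longrightarrow> w \<in> vecs I \<Longrightarrow> vsub u w \<in> vecs I"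
  unfolding vecs_def vsub_def by auto

lemma line_deriv:
  assumes fin: "finite I" and hg: "has_grad I f g (\<lambda>a. z a + s * d a)"
    and z: "z \<in> vecs I" and d: "d \<in> vecs I"
  shows "((\<lambda>t. f (\<lambda>a. z a + t * d a)) has_real_derivative ip I g d) (at s)"
proof -
  let ?y = "\<lambda>t. (\<lambda>a. z a + t * d a)"
  have "((\<lambda>t. (f (?y t) - f (?y s)) / (t - s)) \<longlongrightarrow> ip I g d) (at s)"
  proof (rule LIM_I)
    fix r :: real assume r: "0 < r"
    define e' where "e' = r / (nrm I d + 1)"
    have np: "0 < nrm I d + 1" using nrm_nonneg[of I d] by linarith
    have e': "0 < e'" unfolding e'_def using r np by simp
    obtain \<delta> where dp: "\<delta> > 0" and H: "\<forall>Z\<in>vecs I. nrm I (vsub Z (?y s)) < \<delta> \<longrightarrow>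
        \<bar>f Z - f (?y s) - ip I g (vsub Z (?y s))\<bar> \<le> e' * nrm I (vsub Z (?y s))"
      using hg e' unfolding has_grad_def by blast
    show "\<exists>s0>0. \<forall>t. t \<noteq> s \<and> norm (t - s) < s0 \<longrightarrow> norm ((f (?y t) - f (?y s)) / (t - s) - ip I g d) < r"
    proof (intro exI[of _ "\<delta> / (nrm I d + 1)"] conjI allI impI)
      show "0 < \<delta> / (nrm I d + 1)" using dp np by simp
      fix t assume t: "t \<noteq> s \<and> norm (t - s) < \<delta> / (nrm I d + 1)"
      have vs: "vsub (?y t) (?y s) = (\<lambda>a. (t - s) * d a)"
        unfolding vsub_def by (auto simp: algebra_simps)
      have nv: "nrm I (vsub (?y t) (?y s)) = \<bar>t - s\<bar> * nrm I d" by (simp add: vs nrm_scale)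
      have "\<bar>t - s\<bar> * nrm I d \<le> \<bar>t - s\<bar> * (nrm I d + 1)" by (simp add: mult_left_mono)
      also have "\<dots> < \<delta>" using t np by (simp add: pos_less_divide_eq)
      finally have lt: "nrm I (vsub (?y t) (?y s)) < \<delta>" by (simp add: nv)
      have yt: "?y t \<in> vecs I" using z d unfolding vecs_def by auto
      have h1: "\<bar>f (?y t) - f (?y s) - ip I g (vsub (?y t) (?y s))\<bar> \<le> e' * nrm I (vsub (?y t) (?y s))"
        using H yt lt by blast
      have "\<bar>f (?y t) - f (?y s) - (t - s) * ip I g d\<bar> \<le> e' * (\<bar>t - s\<bar> * nrm I d)"
        using h1 unfolding vs ip_scale_right nrm_scale .
      hence "\<bar>f (?y t) - f (?y s) - (t - s) * ip I g d\<bar> \<le> (e' * nrm I d) * \<bar>t - s\<bar>"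
        by (simp only: mult_ac)
      moreover have "\<bar>t - s\<bar> > 0" using t by simp
      ultimately have "\<bar>f (?y t) - f (?y s) - (t - s) * ip I g d\<bar> / \<bar>t - s\<bar> \<le> e' * nrm I d"
        by (simp add: pos_divide_le_eq)
      hence "\<bar>(f (?y t) - f (?y s) - (t - s) * ip I g d) / (t - s)\<bar> \<le> e' * nrm I d"
        by (simp only: abs_divide)
      moreover have "(f (?y t) - f (?y s) - (t - s) * ip I g d) / (t - s) = (f (?y t) - f (?y s)) / (t - s) - ip I g d"
      proof -
        have "t - s \<noteq> 0" using t by simp
        thus ?thesis by (simp add: diff_divide_distrib)
      qed
      moreover have "e' * nrm I d < r"
      proof -
        have "e' * nrm I d = r * (nrm I d / (nrm I d + 1))" unfolding e'_def by simp
        also have "\<dots> < r * 1" using r np by (intro mult_strict_left_mono) auto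
        finally show ?thesis by simp
      qed
      ultimately show "norm ((f (?y t) - f (?y s)) / (t - s) - ip I g d) < r" by simp
    qed
  qed
  thus ?thesis by (rule has_field_derivative_iff[THEN iffD2])
qed

lemma sum_lin2: "(\<Sum>a\<in>I. s * u a + r * w a) = s * (\<Sum>a\<in>I. u a) + r * (\<Sum>a\<in>I. w a :: real)"
  by (simp add: sum.distrib sum_distrib_left)

lemma ip_lin_left: "ip I (\<lambda>a. s * u a + r * w a) z = s * ip I u z + r * ip I w z"
proof -
  have "ip I (\<lambda>a. s * u a + r * w a) z = (\<Sum>a\<in>I. s * (u a * z a) + r * (w a * z a))"
    unfolding ip_def by (rule sum.cong) (auto simp: algebra_simps)
  thus ?thesis unfolding sum_lin2 ip_def .
qed

lemma grad_has: "lsmooth I L f \<Longrightarrow> y \<in> vecs I \<Longrightarrow> has_grad I f (grad I f y) y"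
proof -
  assume a: "lsmooth I L f" "y \<in> vecs I"
  then obtain g where "has_grad I f g y" unfolding lsmooth_def by blast
  thus ?thesis unfolding grad_def by (rule someI[where P="\<lambda>g. has_grad I f g y"])
qed

lemma descent:
  assumes fin: "finite I" and ls: "lsmooth I L f" and z: "z \<in> vecs I" and w: "w \<in> vecs I"
  shows "f w \<le> f z + ip I (grad I f z) (vsub w z) + L/2 * (nrm I (vsub w z))\<^sup>2"
proof -
  define d where "d = vsub w z"
  have d: "d \<in> vecs I" using vsub_vecs z w d_def by simp
  let ?y = "\<lambda>t. (\<lambda>a. z a + t * d a)"
  have yv: "\<And>t. ?y t \<in> vecs I" using z d unfolding vecs_def by auto
  have hg: "\<And>t. has_grad I f (grad I f (?y t)) (?y t)" using grad_has[OF ls yv] .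
  have y0: "?y 0 = z" by simp
  have y1: "?y 1 = w" unfolding d_def vsub_def by auto
  define \<psi> where "\<psi> t = f (?y t) - t * ip I (grad I f z) d - L * t\<^sup>2 / 2 * (nrm I d)\<^sup>2" for t
  have "\<psi> 1 \<le> \<psi> 0"
  proof (rule DERIV_nonpos_imp_nonincreasing[of 0 1 \<psi>])
    fix t :: real assume t: "0 \<le> t" "t \<le> 1"
    have D1: "((\<lambda>t. f (?y t)) has_real_derivative ip I (grad I f (?y t)) d) (at t)"
      by (rule line_deriv[OF fin hg z d])
    have D2: "((\<lambda>t. t * ip I (grad I f z) d) has_real_derivative ip I (grad I f z) d) (at t)"
      by (auto intro!: derivative_eq_intros)
    have D3: "((\<lambda>t. L * t\<^sup>2 / 2 * (nrm I d)\<^sup>2) has_real_derivative L * t * (nrm I d)\<^sup>2) (at t)"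
      by (auto intro!: derivative_eq_intros)
    have D: "(\<psi> has_real_derivative (ip I (grad I f (?y t)) d - ip I (grad I f z) d - L * t * (nrm I d)\<^sup>2)) (at t)"
      unfolding \<psi>_def[abs_def] by (rule DERIV_diff[OF DERIV_diff[OF D1 D2] D3])
    have "ip I (grad I f (?y t)) d - ip I (grad I f z) d = ip I (vsub (grad I f (?y t)) (grad I f z)) d"
      by (simp add: ip_diff_left)
    also have "\<dots> \<le> nrm I (vsub (grad I f (?y t)) (grad I f z)) * nrm I d" by (rule ip_cs)
    also have "\<dots> \<le> (L * nrm I (vsub (?y t) z)) * nrm I d"
      using ls yv z unfolding lsmooth_def by (intro mult_right_mono) auto
    also have "vsub (?y t) z = (\<lambda>a. t * d a)" unfolding vsub_def by auto
    also have "L * nrm I (\<lambda>a. t * d a) * nrm I d = L * t * (nrm I d)\<^sup>2"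
      using t by (simp add: nrm_scale power2_eq_square)
    finally have "ip I (grad I f (?y t)) d - ip I (grad I f z) d - L * t * (nrm I d)\<^sup>2 \<le> 0" by simp
    with D show "\<exists>y. (\<psi> has_real_derivative y) (at t) \<and> y \<le> 0" by blast
  qed simp
  thus ?thesis using y1 unfolding \<psi>_def d_def by simp
qed

lemma fhat_descent:
  assumes fin: "finite I" and ls: "lsmooth I L f" and z: "z \<in> vecs I" and w: "w \<in> vecs I"
  shows "fhat I \<gamma> f w \<le> fhat I \<gamma> f z + ip I (\<lambda>a. grad I f z a + \<gamma> * z a) (vsub w z) + (L + \<gamma>)/2 * (nrm I (vsub w z))\<^sup>2"
proof -
  have D: "f w \<le> f z + ip I (grad I f z) (vsub w z) + L/2 * (nrm I (vsub w z))\<^sup>2"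
    by (rule descent[OF fin ls z w])
  have e: "(\<Sum>a\<in>I. (w a)\<^sup>2) = (\<Sum>a\<in>I. (z a)\<^sup>2) + 2 * (\<Sum>a\<in>I. z a * (w a - z a)) + (\<Sum>a\<in>I. (w a - z a)\<^sup>2)"
  proof -
    have "(\<Sum>a\<in>I. (w a)\<^sup>2) = (\<Sum>a\<in>I. (z a)\<^sup>2 + 2 * (z a * (w a - z a)) + (w a - z a)\<^sup>2)"
      by (rule sum.cong) (auto simp: power2_eq_square algebra_simps)
    thus ?thesis by (simp add: sum.distrib sum_distrib_left)
  qed
  have ipe: "ip I (\<lambda>a. grad I f z a + \<gamma> * z a) (vsub w z) = ip I (grad I f z) (vsub w z) + \<gamma> * (\<Sum>a\<in>I. z a * (w a - z a))"
  proof -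
    have "(\<Sum>a\<in>I. (grad I f z a + \<gamma> * z a) * (w a - z a)) = (\<Sum>a\<in>I. grad I f z a * (w a - z a) + \<gamma> * (z a * (w a - z a)))"
      by (rule sum.cong) (auto simp: algebra_simps)
    also have "\<dots> = (\<Sum>a\<in>I. grad I f z a * (w a - z a)) + \<gamma> * (\<Sum>a\<in>I. z a * (w a - z a))"
      by (simp only: sum.distrib sum_distrib_left)
    finally show ?thesis unfolding ip_def vsub_def .
  qed
  have nw: "(nrm I w)\<^sup>2 = (\<Sum>a\<in>I. (w a)\<^sup>2)" "(nrm I z)\<^sup>2 = (\<Sum>a\<in>I. (z a)\<^sup>2)"
    "(nrm I (vsub w z))\<^sup>2 = (\<Sum>a\<in>I. (w a - z a)\<^sup>2)"
    using nrm_sq[OF fin] unfolding vsub_def by auto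
  have "\<gamma> / 2 * (nrm I w)\<^sup>2 = \<gamma> / 2 * (nrm I z)\<^sup>2 + \<gamma> * (\<Sum>a\<in>I. z a * (w a - z a)) + \<gamma>/2 * (nrm I (vsub w z))\<^sup>2"
    unfolding nw e by (simp add: algebra_simps)
  moreover have "(L + \<gamma>)/2 * (nrm I (vsub w z))\<^sup>2 = L/2 * (nrm I (vsub w z))\<^sup>2 + \<gamma>/2 * (nrm I (vsub w z))\<^sup>2"
    by (simp add: algebra_simps)
  ultimately show ?thesis unfolding fhat_def ipe using D by linarith
qed

lemma conj_gt: "(\<lambda>a. 0) \<in> vecs I \<Longrightarrow> conj I h y > -\<infinity>"
proof -
  assume "(\<lambda>a. 0) \<in> vecs I"
  hence "ereal (ip I y (\<lambda>a. 0) - h (\<lambda>a. 0)) \<le> conj I h y" unfolding conj_def by (rule SUP_upper)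
  thus ?thesis by (metis MInfty_neq_ereal(1) ereal_infty_less_eq(2) not_MInfty_nonneg not_le)
qed

lemma zero_vecs: "(\<lambda>a. 0) \<in> vecs I" unfolding vecs_def by simp

lemma conj_sc:
  assumes fin: "finite I" and K: "0 < K"
    and desc: "\<forall>z\<in>vecs I. \<exists>g. \<forall>w\<in>vecs I. h w \<le> h z + ip I g (vsub w z) + K/2 * (nrm I (vsub w z))\<^sup>2"
    and y1: "y1 \<in> vecs I" "conj I h y1 < \<infinity>" and y2: "y2 \<in> vecs I" "conj I h y2 < \<infinity>"
    and t: "0 \<le> t" "t \<le> 1"
  shows "conj I h (\<lambda>a. t * y1 a + (1 - t) * y2 a) \<le> ereal (t * real_of_ereal (conj I h y1)
     + (1 - t) * real_of_ereal (conj I h y2) - t * (1 - t) / (2 * K) * (nrm I (vsub y1 y2))\<^sup>2)"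
proof -
  define c1 where "c1 = real_of_ereal (conj I h y1)"
  define c2 where "c2 = real_of_ereal (conj I h y2)"
  have C1: "conj I h y1 = ereal c1" unfolding c1_def using y1 conj_gt[OF zero_vecs, of I h y1]
    by (cases "conj I h y1") auto
  have C2: "conj I h y2 = ereal c2" unfolding c2_def using y2 conj_gt[OF zero_vecs, of I h y2]
    by (cases "conj I h y2") auto
  have P: "(nrm I (vsub y1 y2))\<^sup>2 = (\<Sum>a\<in>I. (y1 a - y2 a)\<^sup>2)"
    using nrm_sq[OF fin] unfolding vsub_def by auto
  have key: "c \<ge> ip I y z - h z + (\<Sum>a\<in>I. (y a - g a)\<^sup>2) / (2 * K)"
    if z: "z \<in> vecs I" and hg: "\<forall>w\<in>vecs I. h w \<le> h z + ip I g (vsub w z) + K/2 * (nrm I (vsub w z))\<^sup>2"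
      and cy: "conj I h y = ereal c" for y c z g
  proof -
    define w where "w = (\<lambda>a. if a \<in> I then z a + (y a - g a) / K else 0)"
    have wv: "w \<in> vecs I" unfolding w_def vecs_def by auto
    have "ereal (ip I y w - h w) \<le> conj I h y" unfolding conj_def using wv by (rule SUP_upper)
    hence c: "ip I y w - h w \<le> c" using cy by simp
    have hw: "h w \<le> h z + ip I g (vsub w z) + K/2 * (nrm I (vsub w z))\<^sup>2" using hg wv by blast
    have n: "(nrm I (vsub w z))\<^sup>2 = (\<Sum>a\<in>I. ((y a - g a) / K)\<^sup>2)"
      using nrm_sq[OF fin] unfolding vsub_def w_def by (auto intro!: sum.cong)
    have "ip I y w - ip I g (vsub w z) - K/2 * (nrm I (vsub w z))\<^sup>2
        = (\<Sum>a\<in>I. y a * (z a + (y a - g a) / K) - g a * ((y a - g a) / K) - K/2 * ((y a - g a) / K)\<^sup>2)"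
    proof -
      have i1: "ip I y w = (\<Sum>a\<in>I. y a * (z a + (y a - g a) / K))" unfolding ip_def w_def by (rule sum.cong) auto
      have i2: "ip I g (vsub w z) = (\<Sum>a\<in>I. g a * ((y a - g a) / K))" unfolding ip_def w_def vsub_def by (rule sum.cong) auto
      show ?thesis unfolding n i1 i2 by (simp add: sum_subtractf sum_distrib_left)
    qed
    also have "\<dots> = (\<Sum>a\<in>I. y a * z a + (y a - g a)\<^sup>2 / (2 * K))"
      using K by (intro sum.cong) (auto simp: field_simps power2_eq_square)
    also have "\<dots> = ip I y z + (\<Sum>a\<in>I. (y a - g a)\<^sup>2) / (2 * K)"
      unfolding ip_def by (simp add: sum.distrib sum_divide_distrib)
    finally show ?thesis using c hw by linarith
  qed
  have "conj I h (\<lambda>a. t * y1 a + (1 - t) * y2 a) \<le> ereal (t * c1 + (1 - t) * c2 - t * (1 - t) / (2 * K) * (nrm I (vsub y1 y2))\<^sup>2)"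
    unfolding conj_def
  proof (rule SUP_least)
    fix z assume z: "z \<in> vecs I"
    obtain g where hg: "\<forall>w\<in>vecs I. h w \<le> h z + ip I g (vsub w z) + K/2 * (nrm I (vsub w z))\<^sup>2"
      using desc z by blast
    define Q1 where "Q1 = (\<Sum>a\<in>I. (y1 a - g a)\<^sup>2)"
    define Q2 where "Q2 = (\<Sum>a\<in>I. (y2 a - g a)\<^sup>2)"
    define PP where "PP = (\<Sum>a\<in>I. (y1 a - y2 a)\<^sup>2)"
    have k1: "c1 \<ge> ip I y1 z - h z + Q1 / (2 * K)" using key[OF z hg C1] Q1_def by simp
    have k2: "c2 \<ge> ip I y2 z - h z + Q2 / (2 * K)" using key[OF z hg C2] Q2_def by simp
    have pos: "t * Q1 + (1 - t) * Q2 - t * (1 - t) * PP \<ge> 0"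
    proof -
      have "t * Q1 + (1 - t) * Q2 - t * (1 - t) * PP = (\<Sum>a\<in>I. (t * y1 a + (1 - t) * y2 a - g a)\<^sup>2)"
      proof -
        have "t * Q1 + (1 - t) * Q2 - t * (1 - t) * PP
           = (\<Sum>a\<in>I. t * (y1 a - g a)\<^sup>2 + (1 - t) * (y2 a - g a)\<^sup>2 - t * (1 - t) * (y1 a - y2 a)\<^sup>2)"
          unfolding Q1_def Q2_def PP_def by (simp add: sum_subtractf sum.distrib sum_distrib_left)
        also have "\<dots> = (\<Sum>a\<in>I. (t * y1 a + (1 - t) * y2 a - g a)\<^sup>2)"
          by (intro sum.cong) (auto simp: power2_eq_square algebra_simps)
        finally show ?thesis .
      qed
      thus ?thesis by (simp add: sum_nonneg)
    qed
    have ipt: "ip I (\<lambda>a. t * y1 a + (1 - t) * y2 a) z = t * ip I y1 z + (1 - t) * ip I y2 z"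
      by (rule ip_lin_left)
    have m1: "t * c1 \<ge> t * (ip I y1 z - h z + Q1 / (2 * K))" using k1 t by (intro mult_left_mono) auto 
    have m2: "(1 - t) * c2 \<ge> (1 - t) * (ip I y2 z - h z + Q2 / (2 * K))" using k2 t by (intro mult_left_mono) auto
    have q: "(t * Q1 + (1 - t) * Q2 - t * (1 - t) * PP) / (2 * K) \<ge> 0" using pos K by simp
    have "ip I (\<lambda>a. t * y1 a + (1 - t) * y2 a) z - h z \<le> t * c1 + (1 - t) * c2 - t * (1 - t) / (2 * K) * PP"
      using m1 m2 q unfolding ipt by (simp add: algebra_simps add_divide_distrib diff_divide_distrib)
    thus "ereal (ip I (\<lambda>a. t * y1 a + (1 - t) * y2 a) z - h z)
       \<le> ereal (t * c1 + (1 - t) * c2 - t * (1 - t) / (2 * K) * (nrm I (vsub y1 y2))\<^sup>2)"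
      unfolding P PP_def[symmetric] by simp
  qed
  thus ?thesis unfolding c1_def c2_def .
qed





lemma nrm_cvx_id:
  assumes fin: "finite I"
  shows "(nrm I (vsub (\<lambda>a. t * x a + (1 - t) * y a) w))\<^sup>2 =
     t * (nrm I (vsub x w))\<^sup>2 + (1 - t) * (nrm I (vsub y w))\<^sup>2 - t * (1 - t) * (nrm I (vsub x y))\<^sup>2"
proof -
  have "(nrm I (vsub (\<lambda>a. t * x a + (1 - t) * y a) w))\<^sup>2 = (\<Sum>a\<in>I. (t * x a + (1 - t) * y a - w a)\<^sup>2)"
    using nrm_sq[OF fin] unfolding vsub_def by simp
  also have "\<dots> = (\<Sum>a\<in>I. t * (x a - w a)\<^sup>2 + (1 - t) * (y a - w a)\<^sup>2 - t * (1 - t) * (x a - y a)\<^sup>2)"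
    by (rule sum.cong) (auto simp: power2_eq_square algebra_simps)
  also have "\<dots> = t * (\<Sum>a\<in>I. (x a - w a)\<^sup>2) + (1 - t) * (\<Sum>a\<in>I. (y a - w a)\<^sup>2) - t * (1 - t) * (\<Sum>a\<in>I. (x a - y a)\<^sup>2)"
    by (simp add: sum_subtractf sum.distrib sum_distrib_left)
  finally show ?thesis using nrm_sq[OF fin] unfolding vsub_def by simp
qed

lemma nrm_sym: "nrm I (vsub x y) = nrm I (vsub y x)"
proof -
  have "vsub x y = (\<lambda>a. (-1) * vsub y x a)" unfolding vsub_def by auto
  thus ?thesis using nrm_scale[of I "-1" "vsub y x"] by simp
qed

lemma nrm_cvx_id':
  assumes fin: "finite I"
  shows "(nrm I (vsub w (\<lambda>a. t * x a + (1 - t) * y a)))\<^sup>2 =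
     t * (nrm I (vsub w x))\<^sup>2 + (1 - t) * (nrm I (vsub w y))\<^sup>2 - t * (1 - t) * (nrm I (vsub x y))\<^sup>2"
  using nrm_cvx_id[OF fin, of t x y w] nrm_sym[of I w "\<lambda>a. t * x a + (1 - t) * y a"] nrm_sym[of I w x]
    nrm_sym[of I w y] by simp

lemma nrm_tri: "nrm I (vsub x z) \<le> nrm I (vsub x y) + nrm I (vsub y z)"
proof -
  have "vsub x z = (\<lambda>a. vsub x y a + vsub y z a)" unfolding vsub_def by auto
  thus ?thesis using nrm_add by metis
qed

lemma vecs_complete:
  assumes fin: "finite I" and u: "\<And>k. u k \<in> vecs I"
    and C: "\<And>e. 0 < e \<Longrightarrow> \<exists>M. \<forall>k\<ge>M. \<forall>l\<ge>M. nrm I (vsub (u k) (u l)) < e"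
  shows "\<exists>p\<in>vecs I. (\<lambda>k. nrm I (vsub (u k) p)) \<longlonglongrightarrow> 0 \<and> (\<forall>a. (\<lambda>k. u k a) \<longlonglongrightarrow> p a)"
proof -
  have cau: "Cauchy (\<lambda>k. u k a)" for a
  proof (rule CauchyI)
    fix e :: real assume e: "0 < e"
    obtain M where M: "\<forall>k\<ge>M. \<forall>l\<ge>M. nrm I (vsub (u k) (u l)) < e" using C[OF e] by blast
    show "\<exists>M. \<forall>m\<ge>M. \<forall>n\<ge>M. norm (u m a - u n a) < e"
    proof (intro exI[of _ M] allI impI)
      fix k l assume kl: "M \<le> k" "M \<le> l"
      show "norm (u k a - u l a) < e"
      proof (cases "a \<in> I")
        case True
        have "\<bar>vsub (u k) (u l) a\<bar> \<le> nrm I (vsub (u k) (u l))" by (rule abs_le_nrm[OF fin True])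
        thus ?thesis using M kl unfolding vsub_def by fastforce
      next
        case False
        thus ?thesis using u e unfolding vecs_def by simp
      qed
    qed
  qed
  define p where "p a = lim (\<lambda>k. u k a)" for a
  have conv: "(\<lambda>k. u k a) \<longlonglongrightarrow> p a" for a
    using cau[of a] unfolding p_def Cauchy_convergent_iff convergent_LIMSEQ_iff .
  have pv: "p \<in> vecs I"
  proof -
    have "p a = 0" if "a \<notin> I" for a
    proof -
      have "(\<lambda>k. u k a) = (\<lambda>k. 0)" using u that unfolding vecs_def by auto
      thus ?thesis unfolding p_def by simp
    qed
    thus ?thesis unfolding vecs_def by blast
  qed
  have "(\<lambda>k. sqrt (\<Sum>a\<in>I. (u k a - p a)\<^sup>2)) \<longlonglongrightarrow> sqrt (\<Sum>a\<in>I. (p a - p a)\<^sup>2)"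
    by (intro tendsto_intros conv)
  hence "(\<lambda>k. nrm I (vsub (u k) p)) \<longlonglongrightarrow> 0" unfolding nrm_def L2_set_def vsub_def by simp
  thus ?thesis using pv conv by blast
qed

lemma id4:
  assumes fin: "finite I"
  shows "(nrm I z')\<^sup>2/2 - (nrm I z)\<^sup>2/2 - (nrm I (vsub z' q))\<^sup>2/2 + (nrm I (vsub z q))\<^sup>2/2 = ip I q (vsub z' z)"
proof -
  have "(nrm I z')\<^sup>2/2 - (nrm I z)\<^sup>2/2 - (nrm I (vsub z' q))\<^sup>2/2 + (nrm I (vsub z q))\<^sup>2/2
     = ((\<Sum>a\<in>I. (z' a)\<^sup>2) - (\<Sum>a\<in>I. (z a)\<^sup>2) - (\<Sum>a\<in>I. (z' a - q a)\<^sup>2) + (\<Sum>a\<in>I. (z a - q a)\<^sup>2)) / 2"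
    using nrm_sq[OF fin] unfolding vsub_def by (simp add: field_simps)
  also have "\<dots> = (\<Sum>a\<in>I. (z' a)\<^sup>2 - (z a)\<^sup>2 - (z' a - q a)\<^sup>2 + (z a - q a)\<^sup>2) / 2"
    by (simp add: sum_subtractf sum.distrib)
  also have "\<dots> = (\<Sum>a\<in>I. 2 * (q a * (z' a - z a))) / 2"
    by (intro arg_cong[where f="\<lambda>x. x / 2"] sum.cong) (auto simp: power2_eq_square algebra_simps)
  also have "\<dots> = ip I q (vsub z' z)" unfolding ip_def vsub_def by (simp add: sum_distrib_left[symmetric])
  finally show ?thesis .
qed

lemma vsub_zero: "vsub z (\<lambda>a. 0) = z" unfolding vsub_def by simp

lemma arith3: "(Et::real) = t*A + (1-t)*B - c/2 \<Longrightarrow> Nt = t*N1 + (1-t)*N2 - c \<Longrightarrow> t*E1 \<le> t*A \<Longrightarrow> (1-t)*E2 \<le> (1-t)*B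
  \<Longrightarrow> Nt/2 - Et \<le> t*(N1/2 - E1) + (1-t)*(N2/2 - E2)"
proof -
  assume h1: "Et = t*A + (1-t)*B - c/2" and h2: "Nt = t*N1 + (1-t)*N2 - c" and h3: "t*E1 \<le> t*A"
    and h4: "(1-t)*E2 \<le> (1-t)*B"
  have e: "Nt/2 - Et = t*(N1/2 - A) + (1-t)*(N2/2 - B)" unfolding h1 h2 by (simp add: field_simps)
  have "t*(N1/2 - A) \<le> t*(N1/2 - E1)" using h3 by (simp add: right_diff_distrib)
  moreover have "(1-t)*(N2/2 - B) \<le> (1-t)*(N2/2 - E2)" using h4 by (simp add: right_diff_distrib)
  ultimately show ?thesis unfolding e by linarith
qed

lemma arith1: "(a::real) * X \<le> a * Y \<Longrightarrow> R = a * Y + P / 2 \<Longrightarrow> N = P \<Longrightarrow> a * X + N / 2 \<le> R"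
  by linarith

lemma arith2: "(a::real) \<le> c \<Longrightarrow> b \<le> c \<Longrightarrow> 4 * (a + b) \<le> 8 * c"
  by (smt (verit))

context
  fixes I :: "'a set" and \<phi> :: "('a \<Rightarrow> real) \<Rightarrow> ereal" and \<alpha> :: real
  assumes fin: "finite I" and pcc: "proper_closed_convex I \<phi>" and apos: "0 < \<alpha>"
begin

lemma phi_fin: "w \<in> vecs I \<Longrightarrow> \<phi> w \<noteq> \<infinity> \<Longrightarrow> \<phi> w = ereal (real_of_ereal (\<phi> w))"
  using pcc unfolding proper_closed_convex_def by (cases "\<phi> w") auto

lemma phi_cvx: "x \<in> vecs I \<Longrightarrow> y \<in> vecs I \<Longrightarrow> 0 \<le> t \<Longrightarrow> t \<le> 1 \<Longrightarrow>
   \<phi> (\<lambda>a. t * x a + (1 - t) * y a) \<le> ereal t * \<phi> x + ereal (1 - t) * \<phi> y"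
  using pcc unfolding proper_closed_convex_def convex_fn_def by blast

lemma phi_cvx_real:
  assumes x: "x \<in> vecs I" "\<phi> x \<noteq> \<infinity>" and y: "y \<in> vecs I" "\<phi> y \<noteq> \<infinity>" and t: "0 \<le> t" "t \<le> 1"
  shows "\<phi> (\<lambda>a. t * x a + (1 - t) * y a) \<noteq> \<infinity> \<and>
    real_of_ereal (\<phi> (\<lambda>a. t * x a + (1 - t) * y a)) \<le> t * real_of_ereal (\<phi> x) + (1 - t) * real_of_ereal (\<phi> y)"
proof -
  have v: "(\<lambda>a. t * x a + (1 - t) * y a) \<in> vecs I" using x y vecs_lin by blast
  have "\<phi> (\<lambda>a. t * x a + (1 - t) * y a) \<le> ereal (t * real_of_ereal (\<phi> x) + (1 - t) * real_of_ereal (\<phi> y))"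
    using phi_cvx[OF x(1) y(1) t] phi_fin[OF x] phi_fin[OF y] by (metis times_ereal.simps(1) plus_ereal.simps(1))
  moreover have "\<phi> (\<lambda>a. t * x a + (1 - t) * y a) \<noteq> -\<infinity>" using pcc v unfolding proper_closed_convex_def by blast
  ultimately show ?thesis by (cases "\<phi> (\<lambda>a. t * x a + (1 - t) * y a)") auto
qed

lemma phi_lower: "\<exists>x0\<in>vecs I. \<exists>c0 r. 0 < r \<and> (\<forall>w\<in>vecs I. ereal (c0 - nrm I (vsub w x0) / r) \<le> \<phi> w)"
proof -
  obtain x0 where x0: "x0 \<in> vecs I" "\<phi> x0 \<noteq> \<infinity>" using pcc unfolding proper_closed_convex_def by blast
  define c where "c = real_of_ereal (\<phi> x0)"
  have cx: "\<phi> x0 = ereal c" using phi_fin[OF x0] c_def by simp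
  have "\<exists>r>0. \<forall>w\<in>vecs I. nrm I (vsub w x0) \<le> r \<longrightarrow> ereal (c - 1) \<le> \<phi> w"
  proof (rule ccontr)
    assume "\<not> ?thesis"
    hence "\<forall>k::nat. \<exists>w. w \<in> vecs I \<and> nrm I (vsub w x0) \<le> inverse (real (Suc k)) \<and> \<phi> w < ereal (c - 1)"
      by (metis inverse_positive_iff_positive not_le of_nat_0_less_iff zero_less_Suc)
    then obtain u where u: "\<And>k. u k \<in> vecs I" "\<And>k. nrm I (vsub (u k) x0) \<le> inverse (real (Suc k))"
        "\<And>k. \<phi> (u k) < ereal (c - 1)" by metis
    have "(\<lambda>k. nrm I (vsub (u k) x0)) \<longlonglongrightarrow> 0"
    proof (rule tendsto_sandwich[of "\<lambda>k. 0" _ _ "\<lambda>k. inverse (real (Suc k))"])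
      show "\<forall>\<^sub>F n in sequentially. 0 \<le> nrm I (vsub (u n) x0)" by simp
      show "\<forall>\<^sub>F n in sequentially. nrm I (vsub (u n) x0) \<le> inverse (real (Suc n))"
        using u(2) by (intro always_eventually) blast
      show "(\<lambda>k. 0::real) \<longlonglongrightarrow> 0" by simp
      show "(\<lambda>k. inverse (real (Suc k))) \<longlonglongrightarrow> 0" by (rule LIMSEQ_inverse_real_of_nat)
    qed
    hence "\<phi> x0 \<le> liminf (\<lambda>k. \<phi> (u k))" using pcc u(1) x0(1) unfolding proper_closed_convex_def by blast
    also have "\<dots> \<le> ereal (c - 1)"
      by (rule Liminf_le) (auto simp: u(3) less_imp_le)
    finally show False using cx by simp
  qed
  then obtain r where r: "0 < r" "\<And>w. w \<in> vecs I \<Longrightarrow> nrm I (vsub w x0) \<le> r \<Longrightarrow> ereal (c - 1) \<le> \<phi> w"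
    by blast
  have "ereal (c - 1 - nrm I (vsub w x0) / r) \<le> \<phi> w" if w: "w \<in> vecs I" for w
  proof (cases "nrm I (vsub w x0) \<le> r")
    case True
    have "ereal (c - 1 - nrm I (vsub w x0) / r) \<le> ereal (c - 1)" using r by simp
    also have "\<dots> \<le> \<phi> w" using r(2)[OF w True] .
    finally show ?thesis .
  next
    case False
    show ?thesis
    proof (cases "\<phi> w = \<infinity>")
      case True thus ?thesis by simp
    next
      case fw: False
      define N where "N = nrm I (vsub w x0)"
      define s where "s = r / N"
      have N: "r < N" using False N_def by simp
      have s: "0 < s" "s \<le> 1" using N r unfolding s_def by auto
      let ?u = "\<lambda>a. s * w a + (1 - s) * x0 a"
      have uv: "?u \<in> vecs I" using w x0 vecs_lin by blast
      have "vsub ?u x0 = (\<lambda>a. s * vsub w x0 a)" unfolding vsub_def by (auto simp: algebra_simps)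
      hence "nrm I (vsub ?u x0) = s * N" using s by (simp add: nrm_scale N_def)
      also have "\<dots> = r" unfolding s_def using N r by simp
      finally have A: "ereal (c - 1) \<le> \<phi> ?u" using r(2)[OF uv] by simp
      have B: "\<phi> ?u \<noteq> \<infinity> \<and> real_of_ereal (\<phi> ?u) \<le> s * real_of_ereal (\<phi> w) + (1 - s) * c"
        using phi_cvx_real[OF w fw x0 less_imp_le[OF s(1)] s(2)] cx by simp
      have eu: "\<phi> ?u = ereal (real_of_ereal (\<phi> ?u))" using phi_fin[OF uv] B by blast
      have "ereal (c - 1) \<le> ereal (real_of_ereal (\<phi> ?u))" by (subst eu[symmetric]) (rule A)
      hence "c - 1 \<le> real_of_ereal (\<phi> ?u)" by (simp only: ereal_less_eq(3))
      hence "c - 1 \<le> s * real_of_ereal (\<phi> w) + (1 - s) * c" using B by linarith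
      hence "s * (c - real_of_ereal (\<phi> w)) \<le> 1" by (simp add: algebra_simps)
      hence "c - real_of_ereal (\<phi> w) \<le> N / r" using s N r unfolding s_def by (simp add: field_simps)
      hence "c - 1 - N / r \<le> real_of_ereal (\<phi> w)" by simp
      thus ?thesis using phi_fin[OF w fw] N_def by (metis ereal_less_eq(3))
    qed
  qed
  thus ?thesis using x0 r by blast
qed

definition Fr where "Fr z w = \<alpha> * real_of_ereal (\<phi> w) + (nrm I (vsub z w))\<^sup>2 / 2"

lemma F_sc:
  assumes w1: "w1 \<in> vecs I" "\<phi> w1 \<noteq> \<infinity>" and w2: "w2 \<in> vecs I" "\<phi> w2 \<noteq> \<infinity>" and t: "0 \<le> t" "t \<le> 1"
  shows "\<phi> (\<lambda>a. t * w1 a + (1 - t) * w2 a) \<noteq> \<infinity> \<and>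
    Fr z (\<lambda>a. t * w1 a + (1 - t) * w2 a) \<le> t * Fr z w1 + (1 - t) * Fr z w2 - t * (1 - t) / 2 * (nrm I (vsub w1 w2))\<^sup>2"
proof -
  note c = phi_cvx_real[OF w1 w2 t]
  have "\<alpha> * real_of_ereal (\<phi> (\<lambda>a. t * w1 a + (1 - t) * w2 a)) \<le> \<alpha> * (t * real_of_ereal (\<phi> w1) + (1 - t) * real_of_ereal (\<phi> w2))"
    using c apos by (intro mult_left_mono) auto
  moreover have "t * Fr z w1 + (1 - t) * Fr z w2 - t * (1 - t) / 2 * (nrm I (vsub w1 w2))\<^sup>2
     = \<alpha> * (t * real_of_ereal (\<phi> w1) + (1 - t) * real_of_ereal (\<phi> w2))
       + (t * (nrm I (vsub z w1))\<^sup>2 + (1 - t) * (nrm I (vsub z w2))\<^sup>2 - t * (1 - t) * (nrm I (vsub w1 w2))\<^sup>2) / 2"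
    unfolding Fr_def by (simp add: field_simps)
  moreover note nrm_cvx_id'[OF fin, of z t w1 w2]
  ultimately have "Fr z (\<lambda>a. t * w1 a + (1 - t) * w2 a) \<le> t * Fr z w1 + (1 - t) * Fr z w2 - t * (1 - t) / 2 * (nrm I (vsub w1 w2))\<^sup>2"
    unfolding Fr_def by (rule arith1)
  with c show ?thesis by blast
qed

lemma F_lower: "z \<in> vecs I \<Longrightarrow> \<exists>B. \<forall>w\<in>vecs I. \<phi> w \<noteq> \<infinity> \<longrightarrow> B \<le> Fr z w"
proof -
  assume z: "z \<in> vecs I"
  obtain x0 c0 r where x0: "x0 \<in> vecs I" and r: "0 < r" and lb: "\<And>w. w \<in> vecs I \<Longrightarrow> ereal (c0 - nrm I (vsub w x0) / r) \<le> \<phi> w"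
    using phi_lower by blast
  define \<beta> where "\<beta> = \<alpha> / r"
  have \<beta>: "0 < \<beta>" using apos r unfolding \<beta>_def by simp
  have "\<alpha> * c0 - \<beta> * nrm I (vsub z x0) - \<beta>\<^sup>2 / 2 \<le> Fr z w" if w: "w \<in> vecs I" "\<phi> w \<noteq> \<infinity>" for w
  proof -
    define Nw where "Nw = nrm I (vsub z w)"
    have "c0 - nrm I (vsub w x0) / r \<le> real_of_ereal (\<phi> w)" using lb[OF w(1)] phi_fin[OF w] by (metis ereal_less_eq(3))
    hence "\<alpha> * (c0 - nrm I (vsub w x0) / r) \<le> \<alpha> * real_of_ereal (\<phi> w)" using apos by (intro mult_left_mono) auto
    hence A: "\<alpha> * c0 - \<beta> * nrm I (vsub w x0) \<le> \<alpha> * real_of_ereal (\<phi> w)" unfolding \<beta>_def by (simp add: algebra_simps)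
    have "nrm I (vsub w x0) \<le> nrm I (vsub w z) + nrm I (vsub z x0)" by (rule nrm_tri)
    hence "\<beta> * nrm I (vsub w x0) \<le> \<beta> * (Nw + nrm I (vsub z x0))" using \<beta> nrm_sym[of I w z] unfolding Nw_def
      by (intro mult_left_mono) auto
    moreover have "0 \<le> (Nw - \<beta>)\<^sup>2 / 2" by simp
    hence "\<beta> * Nw - \<beta>\<^sup>2 / 2 \<le> Nw\<^sup>2 / 2" by (simp add: power2_eq_square algebra_simps)
    ultimately show ?thesis using A unfolding Fr_def Nw_def by (simp add: algebra_simps)
  qed
  thus ?thesis by blast
qed

lemma F_min_exists:
  assumes z: "z \<in> vecs I"
  shows "\<exists>p\<in>vecs I. \<phi> p \<noteq> \<infinity> \<and> (\<forall>w\<in>vecs I. \<phi> w \<noteq> \<infinity> \<longrightarrow> Fr z p \<le> Fr z w)"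
proof -
  define S where "S = Fr z ` {w\<in>vecs I. \<phi> w \<noteq> \<infinity>}"
  obtain x0 where x0: "x0 \<in> vecs I" "\<phi> x0 \<noteq> \<infinity>" using pcc unfolding proper_closed_convex_def by blast
  have Sne: "S \<noteq> {}" using x0 unfolding S_def by blast
  obtain B where B: "\<And>w. w \<in> vecs I \<Longrightarrow> \<phi> w \<noteq> \<infinity> \<Longrightarrow> B \<le> Fr z w" using F_lower[OF z] by blast
  have bdd: "bdd_below S" unfolding S_def bdd_below_def using B by blast
  define m where "m = Inf S"
  have mle: "m \<le> Fr z w" if "w \<in> vecs I" "\<phi> w \<noteq> \<infinity>" for w
    unfolding m_def using bdd that unfolding S_def by (intro cInf_lower) auto
  have "\<exists>w. w \<in> vecs I \<and> \<phi> w \<noteq> \<infinity> \<and> Fr z w < m + inverse (real (Suc k))" for k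
  proof -
    have "Inf S < m + inverse (real (Suc k))" unfolding m_def by simp
    then obtain x where "x \<in> S" "x < m + inverse (real (Suc k))" using cInf_less_iff[OF Sne bdd] by blast
    thus ?thesis unfolding S_def by blast
  qed
  then obtain u where u: "\<And>k. u k \<in> vecs I" "\<And>k. \<phi> (u k) \<noteq> \<infinity>" "\<And>k. Fr z (u k) < m + inverse (real (Suc k))"
    by metis
  have dist: "(nrm I (vsub (u k) (u l)))\<^sup>2 < 4 * (inverse (real (Suc k)) + inverse (real (Suc l)))" for k l
  proof -
    note sc = F_sc[OF u(1) u(2) u(1) u(2), of "1/2" k l z]
    have mv: "(\<lambda>a. 1/2 * u k a + (1 - 1/2) * u l a) \<in> vecs I"
      using u(1)[of k] u(1)[of l] unfolding vecs_def by auto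
    have "m \<le> Fr z (\<lambda>a. 1/2 * u k a + (1 - 1/2) * u l a)"
      using sc mv by (intro mle) auto
    thus ?thesis using sc u(3)[of k] u(3)[of l] by simp
  qed
  have "\<exists>p\<in>vecs I. (\<lambda>k. nrm I (vsub (u k) p)) \<longlonglongrightarrow> 0 \<and> (\<forall>a. (\<lambda>k. u k a) \<longlonglongrightarrow> p a)"
  proof (rule vecs_complete[OF fin u(1)])
    fix e :: real assume e: "0 < e"
    obtain M :: nat where M: "8 / e\<^sup>2 < real M" using reals_Archimedean2 by blast
    have Mp: "0 < real M" using M e by (smt (verit) divide_nonneg_pos zero_less_power)
    have "nrm I (vsub (u k) (u l)) < e" if "M \<le> k" "M \<le> l" for k l
    proof -
      have ik: "inverse (real (Suc k)) \<le> inverse (real M)" using that Mp by (intro le_imp_inverse_le) auto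
      have il: "inverse (real (Suc l)) \<le> inverse (real M)" using that Mp by (intro le_imp_inverse_le) auto
      have "8 / real M < e\<^sup>2" using M Mp e by (simp add: field_simps)
      moreover have "4 * (inverse (real (Suc k)) + inverse (real (Suc l))) \<le> 8 / real M"
        unfolding divide_inverse by (rule arith2[OF ik il])
      ultimately have sq: "(nrm I (vsub (u k) (u l)))\<^sup>2 < e\<^sup>2" using dist[of k l] by linarith
      show ?thesis by (rule power_less_imp_less_base[OF sq]) (use e in simp)
    qed
    thus "\<exists>M. \<forall>k\<ge>M. \<forall>l\<ge>M. nrm I (vsub (u k) (u l)) < e" by blast
  qed
  then obtain p where p: "p \<in> vecs I" "(\<lambda>k. nrm I (vsub (u k) p)) \<longlonglongrightarrow> 0" "\<And>a. (\<lambda>k. u k a) \<longlonglongrightarrow> p a"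
    by blast
  define b where "b k = (m + inverse (real (Suc k)) - (nrm I (vsub z (u k)))\<^sup>2 / 2) / \<alpha>" for k
  have nconv: "(\<lambda>k. (nrm I (vsub z (u k)))\<^sup>2) \<longlonglongrightarrow> (nrm I (vsub z p))\<^sup>2"
  proof -
    have "(\<lambda>k. \<Sum>a\<in>I. (z a - u k a)\<^sup>2) \<longlonglongrightarrow> (\<Sum>a\<in>I. (z a - p a)\<^sup>2)"
      by (intro tendsto_intros p(3))
    thus ?thesis using nrm_sq[OF fin] unfolding vsub_def by simp
  qed
  have bconv: "b \<longlonglongrightarrow> (m + 0 - (nrm I (vsub z p))\<^sup>2 / 2) / \<alpha>"
  proof -
    have "(\<lambda>k. (nrm I (vsub z (u k)))\<^sup>2 / 2) \<longlonglongrightarrow> (nrm I (vsub z p))\<^sup>2 / 2"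
      by (rule tendsto_divide[OF nconv tendsto_const]) simp
    hence "(\<lambda>k. m + inverse (real (Suc k)) - (nrm I (vsub z (u k)))\<^sup>2 / 2) \<longlonglongrightarrow> m + 0 - (nrm I (vsub z p))\<^sup>2 / 2"
      by (intro tendsto_diff tendsto_add tendsto_const LIMSEQ_inverse_real_of_nat)
    thus ?thesis unfolding b_def by (rule tendsto_divide[OF _ tendsto_const]) (use apos in simp)
  qed
  have ub: "\<phi> (u k) \<le> ereal (b k)" for k
  proof -
    have "\<alpha> * real_of_ereal (\<phi> (u k)) < m + inverse (real (Suc k)) - (nrm I (vsub z (u k)))\<^sup>2 / 2"
      using u(3)[of k] unfolding Fr_def by simp
    hence "real_of_ereal (\<phi> (u k)) * \<alpha> \<le> m + inverse (real (Suc k)) - (nrm I (vsub z (u k)))\<^sup>2 / 2"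
      by (metis less_imp_le mult.commute)
    hence "real_of_ereal (\<phi> (u k)) \<le> b k" unfolding b_def by (simp only: pos_le_divide_eq[OF apos])
    thus ?thesis using phi_fin[OF u(1) u(2)] by (metis ereal_less_eq(3))
  qed
  have "\<phi> p \<le> liminf (\<lambda>k. \<phi> (u k))" using pcc p u(1) unfolding proper_closed_convex_def by blast
  also have "\<dots> \<le> liminf (\<lambda>k. ereal (b k))" by (intro Liminf_mono always_eventually allI ub)
  also have "\<dots> = ereal ((m + 0 - (nrm I (vsub z p))\<^sup>2 / 2) / \<alpha>)"
    by (intro lim_imp_Liminf trivial_limit_sequentially tendsto_ereal bconv)
  finally have pb: "\<phi> p \<le> ereal ((m - (nrm I (vsub z p))\<^sup>2 / 2) / \<alpha>)" by simp
  have pf: "\<phi> p \<noteq> \<infinity>" using pb by auto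
  have "real_of_ereal (\<phi> p) \<le> (m - (nrm I (vsub z p))\<^sup>2 / 2) / \<alpha>"
    using pb phi_fin[OF p(1) pf] by (metis ereal_less_eq(3))
  hence "Fr z p \<le> m" unfolding Fr_def using apos by (simp add: field_simps)
  thus ?thesis using p(1) pf mle by force
qed

lemma F_var:
  assumes z: "z \<in> vecs I" and p: "p \<in> vecs I" "\<phi> p \<noteq> \<infinity>"
    and min: "\<forall>w\<in>vecs I. \<phi> w \<noteq> \<infinity> \<longrightarrow> Fr z p \<le> Fr z w"
    and w: "w \<in> vecs I" "\<phi> w \<noteq> \<infinity>"
  shows "Fr z p + (nrm I (vsub w p))\<^sup>2 / 2 \<le> Fr z w"
proof (rule ccontr)
  assume nc: "\<not> ?thesis"
  define Q where "Q = (nrm I (vsub w p))\<^sup>2"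
  define \<delta> where "\<delta> = Fr z p + Q / 2 - Fr z w"
  have dp: "0 < \<delta>" using nc unfolding \<delta>_def Q_def by simp
  have Qp: "0 < Q"
  proof -
    have "Fr z p \<le> Fr z w" using min w by blast
    hence "Q \<noteq> 0" using dp unfolding \<delta>_def by auto
    thus ?thesis unfolding Q_def by simp
  qed
  define t where "t = min 1 (\<delta> / Q)"
  have t: "0 < t" "t \<le> 1" "t * Q \<le> \<delta>" using dp Qp unfolding t_def
    by (auto simp: min_def field_simps)
  note sc = F_sc[OF w p less_imp_le[OF t(1)] t(2), of z]
  have tv: "(\<lambda>a. t * w a + (1 - t) * p a) \<in> vecs I" using w p vecs_lin by blast
  have "Fr z p \<le> Fr z (\<lambda>a. t * w a + (1 - t) * p a)" using min sc tv by blast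
  hence A: "Fr z p \<le> t * Fr z w + (1 - t) * Fr z p - t * (1 - t) / 2 * Q" using sc unfolding Q_def by linarith
  have "t * Fr z p \<le> t * (Fr z w - (1 - t) / 2 * Q)" using A by (simp add: algebra_simps)
  hence "Fr z p \<le> Fr z w - (1 - t) / 2 * Q" using t(1) by (rule mult_left_le_imp_le)
  moreover have "(1 - t) / 2 * Q = Q / 2 - t * Q / 2" by (simp add: field_simps)
  ultimately have "\<delta> \<le> t * Q / 2" unfolding \<delta>_def by linarith
  thus False using t(3) dp by linarith
qed

lemma Fe_fin: "w \<in> vecs I \<Longrightarrow> \<phi> w \<noteq> \<infinity> \<Longrightarrow> ereal \<alpha> * \<phi> w + ereal ((nrm I (vsub z w))\<^sup>2 / 2) = ereal (Fr z w)"
  unfolding Fr_def by (subst phi_fin) auto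

lemma Fe_inf: "\<phi> w = \<infinity> \<Longrightarrow> ereal \<alpha> * \<phi> w + ereal ((nrm I (vsub z w))\<^sup>2 / 2) = \<infinity>"
  using apos by simp

lemma prox_char:
  assumes z: "z \<in> vecs I"
  defines "p \<equiv> prox I (\<lambda>w. ereal \<alpha> * \<phi> w) z"
  shows "p \<in> vecs I \<and> \<phi> p \<noteq> \<infinity> \<and> (\<forall>w\<in>vecs I. \<phi> w \<noteq> \<infinity> \<longrightarrow> Fr z p \<le> Fr z w)
     \<and> env I (\<lambda>w. ereal \<alpha> * \<phi> w) z = ereal (Fr z p)"
proof -
  obtain q where q: "q \<in> vecs I" "\<phi> q \<noteq> \<infinity>" and qmin: "\<forall>w\<in>vecs I. \<phi> w \<noteq> \<infinity> \<longrightarrow> Fr z q \<le> Fr z w"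
    using F_min_exists[OF z] by blast
  have le: "ereal (Fr z q) \<le> ereal \<alpha> * \<phi> w + ereal ((nrm I (vsub z w))\<^sup>2 / 2)" if w: "w \<in> vecs I" for w
  proof (cases "\<phi> w = \<infinity>")
    case True thus ?thesis using Fe_inf by simp
  next
    case False thus ?thesis using Fe_fin[OF w False] qmin w by simp
  qed
  have Pq: "q \<in> vecs I \<and> (\<forall>w\<in>vecs I. ereal \<alpha> * \<phi> q + ereal ((nrm I (vsub z q))\<^sup>2 / 2)
      \<le> ereal \<alpha> * \<phi> w + ereal ((nrm I (vsub z w))\<^sup>2 / 2))"
    using q le Fe_fin[OF q] by simp
  have uniq: "r = q" if r: "r \<in> vecs I \<and> (\<forall>w\<in>vecs I. ereal \<alpha> * \<phi> r + ereal ((nrm I (vsub z r))\<^sup>2 / 2)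
      \<le> ereal \<alpha> * \<phi> w + ereal ((nrm I (vsub z w))\<^sup>2 / 2))" for r
  proof -
    have rq: "ereal \<alpha> * \<phi> r + ereal ((nrm I (vsub z r))\<^sup>2 / 2) \<le> ereal (Fr z q)"
      using r q Fe_fin[OF q] by metis
    have rf: "\<phi> r \<noteq> \<infinity>" using rq Fe_inf[of r z] by auto
    have "Fr z r \<le> Fr z q" using rq Fe_fin[OF _ rf, of z] r by simp
    moreover have "Fr z q + (nrm I (vsub r q))\<^sup>2 / 2 \<le> Fr z r" using F_var[OF z q qmin] r rf by blast
    ultimately have "(nrm I (vsub r q))\<^sup>2 \<le> 0" by linarith
    hence "nrm I (vsub r q) = 0" using nrm_nonneg[of I "vsub r q"] by (metis le_less_trans less_eq_real_def power2_less_0 zero_less_power2 not_le)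
    thus ?thesis using vecs_eqI[OF fin] r q by blast
  qed
  have pq: "p = q" unfolding p_def prox_def
    by (rule the_equality[where P="\<lambda>r. r \<in> vecs I \<and> (\<forall>w\<in>vecs I. ereal \<alpha> * \<phi> r + ereal ((nrm I (vsub z r))\<^sup>2 / 2)
      \<le> ereal \<alpha> * \<phi> w + ereal ((nrm I (vsub z w))\<^sup>2 / 2))", OF Pq uniq])
  have "env I (\<lambda>w. ereal \<alpha> * \<phi> w) z = ereal (Fr z q)" unfolding env_def
  proof (rule antisym)
    show "(INF w\<in>vecs I. ereal \<alpha> * \<phi> w + ereal ((nrm I (vsub z w))\<^sup>2 / 2)) \<le> ereal (Fr z q)"
      using Fe_fin[OF q, of z] INF_lower[OF q(1), of "\<lambda>w. ereal \<alpha> * \<phi> w + ereal ((nrm I (vsub z w))\<^sup>2 / 2)"] by simp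
    show "ereal (Fr z q) \<le> (INF w\<in>vecs I. ereal \<alpha> * \<phi> w + ereal ((nrm I (vsub z w))\<^sup>2 / 2))"
      using le by (rule INF_greatest)
  qed
  thus ?thesis using pq q qmin by simp
qed

end



context
  fixes I :: "'a set" and \<phi> :: "('a \<Rightarrow> real) \<Rightarrow> ereal" and \<alpha> :: real
  assumes fin: "finite I" and pcc: "proper_closed_convex I \<phi>" and apos: "0 < \<alpha>"
begin

lemma G_cvx:
  assumes z1: "z1 \<in> vecs I" and z2: "z2 \<in> vecs I" and t: "0 \<le> t" "t \<le> 1"
  shows "(nrm I (\<lambda>a. t * z1 a + (1 - t) * z2 a))\<^sup>2 / 2 - real_of_ereal (env I (\<lambda>w. ereal \<alpha> * \<phi> w) (\<lambda>a. t * z1 a + (1 - t) * z2 a))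
     \<le> t * ((nrm I z1)\<^sup>2 / 2 - real_of_ereal (env I (\<lambda>w. ereal \<alpha> * \<phi> w) z1))
       + (1 - t) * ((nrm I z2)\<^sup>2 / 2 - real_of_ereal (env I (\<lambda>w. ereal \<alpha> * \<phi> w) z2))"
proof -
  let ?g = "\<lambda>w. ereal \<alpha> * \<phi> w"
  let ?zt = "\<lambda>a. t * z1 a + (1 - t) * z2 a"
  have ztv: "?zt \<in> vecs I" using z1 z2 vecs_lin by blast
  define pt where "pt = prox I ?g ?zt"
  define p1 where "p1 = prox I ?g z1"
  define p2 where "p2 = prox I ?g z2"
  note ct = prox_char[OF fin pcc apos ztv, folded pt_def]
  note c1 = prox_char[OF fin pcc apos z1, folded p1_def]
  note c2 = prox_char[OF fin pcc apos z2, folded p2_def]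
  have E1: "Fr I \<phi> \<alpha> z1 p1 \<le> Fr I \<phi> \<alpha> z1 pt" using c1 ct by blast
  have E2: "Fr I \<phi> \<alpha> z2 p2 \<le> Fr I \<phi> \<alpha> z2 pt" using c2 ct by blast
  have Nid: "(nrm I (vsub ?zt pt))\<^sup>2 = t * (nrm I (vsub z1 pt))\<^sup>2 + (1 - t) * (nrm I (vsub z2 pt))\<^sup>2 - t * (1 - t) * (nrm I (vsub z1 z2))\<^sup>2"
    by (rule nrm_cvx_id[OF fin])
  have Et: "Fr I \<phi> \<alpha> ?zt pt = t * Fr I \<phi> \<alpha> z1 pt + (1 - t) * Fr I \<phi> \<alpha> z2 pt - t * (1 - t) * (nrm I (vsub z1 z2))\<^sup>2 / 2"
    unfolding Fr_def[OF fin pcc apos] Nid by (simp add: field_simps)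
  have Nt: "(nrm I ?zt)\<^sup>2 = t * (nrm I z1)\<^sup>2 + (1 - t) * (nrm I z2)\<^sup>2 - t * (1 - t) * (nrm I (vsub z1 z2))\<^sup>2"
    using nrm_cvx_id[OF fin, of t z1 z2 "\<lambda>a. 0"] unfolding vsub_zero .
  have m1: "t * Fr I \<phi> \<alpha> z1 p1 \<le> t * Fr I \<phi> \<alpha> z1 pt" using E1 t by (intro mult_left_mono) auto
  have m2: "(1 - t) * Fr I \<phi> \<alpha> z2 p2 \<le> (1 - t) * Fr I \<phi> \<alpha> z2 pt" using E2 t by (intro mult_left_mono) auto
  have "(nrm I ?zt)\<^sup>2 / 2 - Fr I \<phi> \<alpha> ?zt pt \<le> t * ((nrm I z1)\<^sup>2 / 2 - Fr I \<phi> \<alpha> z1 p1) + (1 - t) * ((nrm I z2)\<^sup>2 / 2 - Fr I \<phi> \<alpha> z2 p2)"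
    by (rule arith3[OF Et Nt m1 m2])
  thus ?thesis using ct c1 c2 by simp
qed

lemma G_grad:
  assumes z: "z \<in> vecs I" and z': "z' \<in> vecs I"
  shows "\<bar>((nrm I z')\<^sup>2 / 2 - real_of_ereal (env I (\<lambda>w. ereal \<alpha> * \<phi> w) z'))
          - ((nrm I z)\<^sup>2 / 2 - real_of_ereal (env I (\<lambda>w. ereal \<alpha> * \<phi> w) z))
          - ip I (prox I (\<lambda>w. ereal \<alpha> * \<phi> w) z) (vsub z' z)\<bar> \<le> (nrm I (vsub z' z))\<^sup>2"
proof -
  let ?g = "\<lambda>w. ereal \<alpha> * \<phi> w"
  define p where "p = prox I ?g z"
  define p' where "p' = prox I ?g z'"
  note c = prox_char[OF fin pcc apos z, folded p_def]
  note c' = prox_char[OF fin pcc apos z', folded p'_def]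
  have V1: "Fr I \<phi> \<alpha> z p + (nrm I (vsub p' p))\<^sup>2 / 2 \<le> Fr I \<phi> \<alpha> z p'" using F_var[OF fin pcc apos z] c c' by blast
  have V2: "Fr I \<phi> \<alpha> z' p' + (nrm I (vsub p p'))\<^sup>2 / 2 \<le> Fr I \<phi> \<alpha> z' p" using F_var[OF fin pcc apos z'] c c' by blast
  have I1: "(nrm I z')\<^sup>2/2 - (nrm I z)\<^sup>2/2 - (nrm I (vsub z' p))\<^sup>2/2 + (nrm I (vsub z p))\<^sup>2/2 = ip I p (vsub z' z)"
    by (rule id4[OF fin])
  have I2: "(nrm I z')\<^sup>2/2 - (nrm I z)\<^sup>2/2 - (nrm I (vsub z' p'))\<^sup>2/2 + (nrm I (vsub z p'))\<^sup>2/2 = ip I p' (vsub z' z)"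
    by (rule id4[OF fin])
  have ipd: "ip I (vsub p' p) (vsub z' z) = ip I p' (vsub z' z) - ip I p (vsub z' z)" by (rule ip_diff_left)
  have sym: "nrm I (vsub p p') = nrm I (vsub p' p)" by (rule nrm_sym)
  define D where "D = ((nrm I z')\<^sup>2 / 2 - Fr I \<phi> \<alpha> z' p') - ((nrm I z)\<^sup>2 / 2 - Fr I \<phi> \<alpha> z p) - ip I p (vsub z' z)"
  have sq1: "0 \<le> (nrm I (vsub p p'))\<^sup>2" "0 \<le> (nrm I (vsub p' p))\<^sup>2" by simp_all
  have lo: "0 \<le> D" using V2 I1 sq1 unfolding D_def Fr_def[OF fin pcc apos] by linarith
  have up: "D \<le> ip I (vsub p' p) (vsub z' z)" using V1 I2 ipd sq1 unfolding D_def Fr_def[OF fin pcc apos] by linarith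
  have ne: "(nrm I (vsub p' p))\<^sup>2 \<le> ip I (vsub p' p) (vsub z' z)"
    using V1 V2 I1 I2 ipd unfolding Fr_def[OF fin pcc apos] sym by linarith
  have cs: "ip I (vsub p' p) (vsub z' z) \<le> nrm I (vsub p' p) * nrm I (vsub z' z)" by (rule ip_cs)
  have nn: "nrm I (vsub p' p) \<le> nrm I (vsub z' z)"
  proof (cases "nrm I (vsub p' p) = 0")
    case True thus ?thesis by simp
  next
    case False
    hence pos: "0 < nrm I (vsub p' p)" using nrm_nonneg[of I "vsub p' p"] by linarith
    have "nrm I (vsub p' p) * nrm I (vsub p' p) \<le> nrm I (vsub p' p) * nrm I (vsub z' z)"
      using ne cs by (simp add: power2_eq_square mult.commute)
    thus ?thesis using pos by (rule mult_left_le_imp_le)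
  qed
  have "nrm I (vsub p' p) * nrm I (vsub z' z) \<le> nrm I (vsub z' z) * nrm I (vsub z' z)"
    using nn by (intro mult_right_mono) auto
  hence "D \<le> (nrm I (vsub z' z))\<^sup>2" using up cs by (simp add: power2_eq_square)
  hence "\<bar>D\<bar> \<le> (nrm I (vsub z' z))\<^sup>2" using lo by simp
  thus ?thesis unfolding D_def using c c' by (simp add: p_def[symmetric])
qed

end




lemma blkI_Sigma: "blkI m \<kappa> b = Sigma {..<b} (\<lambda>j. {..<m (\<kappa> j)})"
  unfolding blkI_def by auto

lemma blkI_fin: "finite (blkI m \<kappa> b)"
  unfolding blkI_Sigma by auto

lemma sum_blkI: "(\<Sum>q\<in>blkI m \<kappa> b. F q) = (\<Sum>j<b. \<Sum>r<m (\<kappa> j). F (j, r))"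
  unfolding blkI_Sigma by (simp add: sum.Sigma)

lemma nrm_blk_sq: "(nrm (blkI m \<kappa> b) u)\<^sup>2 = (\<Sum>j<b. (nrm {..<m (\<kappa> j)} (blk u j))\<^sup>2)"
  using nrm_sq[OF blkI_fin] nrm_sq[of "{..<m (\<kappa> _)}"] unfolding sum_blkI blk_def by simp

lemma nrm_blk_le: "j < b \<Longrightarrow> nrm {..<m (\<kappa> j)} (blk u j) \<le> nrm (blkI m \<kappa> b) u"
proof -
  assume j: "j < b"
  have "(nrm {..<m (\<kappa> j)} (blk u j))\<^sup>2 \<le> (\<Sum>j<b. (nrm {..<m (\<kappa> j)} (blk u j))\<^sup>2)"
    using j by (intro member_le_sum) auto
  hence "(nrm {..<m (\<kappa> j)} (blk u j))\<^sup>2 \<le> (nrm (blkI m \<kappa> b) u)\<^sup>2" unfolding nrm_blk_sq .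
  thus ?thesis by (rule power2_le_imp_le) simp
qed

lemma blk_vecs: "u \<in> vecs (blkI m \<kappa> b) \<Longrightarrow> j < b \<Longrightarrow> blk u j \<in> vecs {..<m (\<kappa> j)}"
  unfolding vecs_def blk_def blkI_def by auto

lemma blk_lin: "blk (\<lambda>q. s * u q + t * w q) j = (\<lambda>r. s * blk u j r + t * blk w j r)"
  unfolding blk_def by simp

lemma blk_vsub: "blk (vsub u w) j = vsub (blk u j) (blk w j)"
  unfolding blk_def vsub_def by simp

lemma ASt_lin: "ASt n m A \<kappa> b (\<lambda>q. s * u q + t * w q) c = s * ASt n m A \<kappa> b u c + t * ASt n m A \<kappa> b w c"
proof (cases "c < n")
  case True
  have "(\<Sum>j<b. \<Sum>r<m (\<kappa> j). A (\<kappa> j) r c * (s * u (j, r) + t * w (j, r)))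
     = s * (\<Sum>j<b. \<Sum>r<m (\<kappa> j). A (\<kappa> j) r c * u (j, r)) + t * (\<Sum>j<b. \<Sum>r<m (\<kappa> j). A (\<kappa> j) r c * w (j, r))"
    by (simp add: sum.distrib sum_distrib_left algebra_simps)
  thus ?thesis using True unfolding ASt_def by (simp add: algebra_simps)
qed (simp add: ASt_def)

lemma zS_lin: "zS n m A \<kappa> b \<alpha> x v (\<lambda>q. t * u q + (1 - t) * w q) = (\<lambda>c. t * zS n m A \<kappa> b \<alpha> x v u c + (1 - t) * zS n m A \<kappa> b \<alpha> x v w c)"
  unfolding zS_def ASt_lin by (auto simp: algebra_simps)

lemma ASt_vsub: "ASt n m A \<kappa> b (vsub u w) c = ASt n m A \<kappa> b u c - ASt n m A \<kappa> b w c"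
proof -
  have "vsub u w = (\<lambda>q. 1 * u q + (-1) * w q)" unfolding vsub_def by auto
  hence "ASt n m A \<kappa> b (vsub u w) c = 1 * ASt n m A \<kappa> b u c + (-1) * ASt n m A \<kappa> b w c"
    by (simp only: ASt_lin)
  thus ?thesis by simp
qed

lemma zS_vsub: "vsub (zS n m A \<kappa> b \<alpha> x v u) (zS n m A \<kappa> b \<alpha> x v w) = (\<lambda>c. (- \<alpha>) * ASt n m A \<kappa> b (vsub u w) c)"
  unfolding ASt_vsub unfolding zS_def vsub_def by (auto simp: algebra_simps)

lemma zS_vecs: "x \<in> vecs {..<n} \<Longrightarrow> v \<in> vecs {..<n} \<Longrightarrow> zS n m A \<kappa> b \<alpha> x v u \<in> vecs {..<n}"
  unfolding vecs_def zS_def ASt_def by auto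

lemma ASt_bound:
  "nrm {..<n} (ASt n m A \<kappa> b d) \<le> (\<Sum>c<n. \<Sum>j<b. \<Sum>r<m (\<kappa> j). \<bar>A (\<kappa> j) r c\<bar>) * nrm (blkI m \<kappa> b) d"
proof -
  let ?N = "nrm (blkI m \<kappa> b) d"
  have hc: "\<bar>ASt n m A \<kappa> b d c\<bar> \<le> (\<Sum>j<b. \<Sum>r<m (\<kappa> j). \<bar>A (\<kappa> j) r c\<bar>) * ?N" if c: "c < n" for c
  proof -
    have ib: "\<bar>1 / real b\<bar> \<le> 1" by (cases b) auto
    have "\<bar>\<Sum>j<b. \<Sum>r<m (\<kappa> j). A (\<kappa> j) r c * d (j, r)\<bar> \<le> (\<Sum>j<b. \<Sum>r<m (\<kappa> j). \<bar>A (\<kappa> j) r c * d (j, r)\<bar>)"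
      by (rule order_trans[OF sum_abs]) (intro sum_mono sum_abs)
    also have "\<dots> \<le> (\<Sum>j<b. \<Sum>r<m (\<kappa> j). \<bar>A (\<kappa> j) r c\<bar> * ?N)"
    proof (intro sum_mono)
      fix j r assume "j \<in> {..<b}" "r \<in> {..<m (\<kappa> j)}"
      hence "(j, r) \<in> blkI m \<kappa> b" unfolding blkI_def by auto
      hence "\<bar>d (j, r)\<bar> \<le> ?N" by (rule abs_le_nrm[OF blkI_fin])
      thus "\<bar>A (\<kappa> j) r c * d (j, r)\<bar> \<le> \<bar>A (\<kappa> j) r c\<bar> * ?N" by (simp add: abs_mult mult_left_mono)
    qed
    also have "\<dots> = (\<Sum>j<b. \<Sum>r<m (\<kappa> j). \<bar>A (\<kappa> j) r c\<bar>) * ?N" by (simp add: sum_distrib_right)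
    finally have S: "\<bar>\<Sum>j<b. \<Sum>r<m (\<kappa> j). A (\<kappa> j) r c * d (j, r)\<bar> \<le> (\<Sum>j<b. \<Sum>r<m (\<kappa> j). \<bar>A (\<kappa> j) r c\<bar>) * ?N" .
    have "\<bar>ASt n m A \<kappa> b d c\<bar> = \<bar>1 / real b\<bar> * \<bar>\<Sum>j<b. \<Sum>r<m (\<kappa> j). A (\<kappa> j) r c * d (j, r)\<bar>"
      using c unfolding ASt_def by (simp add: abs_mult)
    also have "\<dots> \<le> 1 * ((\<Sum>j<b. \<Sum>r<m (\<kappa> j). \<bar>A (\<kappa> j) r c\<bar>) * ?N)"
      using ib S by (intro mult_mono) auto
    finally show ?thesis by simp
  qed
  have "nrm {..<n} (ASt n m A \<kappa> b d) \<le> (\<Sum>c<n. \<bar>ASt n m A \<kappa> b d c\<bar>)" unfolding nrm_def by (rule L2_set_le_sum_abs)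
  also have "\<dots> \<le> (\<Sum>c<n. (\<Sum>j<b. \<Sum>r<m (\<kappa> j). \<bar>A (\<kappa> j) r c\<bar>) * ?N)" by (intro sum_mono hc) auto
  also have "\<dots> = (\<Sum>c<n. \<Sum>j<b. \<Sum>r<m (\<kappa> j). \<bar>A (\<kappa> j) r c\<bar>) * ?N" by (simp add: sum_distrib_right)
  finally show ?thesis .
qed

lemma ipz:
  "ip {..<n} p (\<lambda>c. (- \<alpha>) * ASt n m A \<kappa> b d c)
     = - (\<alpha> / real b) * (\<Sum>j<b. \<Sum>r<m (\<kappa> j). matv (m (\<kappa> j)) n (A (\<kappa> j)) p r * d (j, r))"
proof -
  have "ip {..<n} p (\<lambda>c. (- \<alpha>) * ASt n m A \<kappa> b d c)
      = (\<Sum>c<n. (- (\<alpha> / real b)) * (\<Sum>j<b. \<Sum>r<m (\<kappa> j). p c * A (\<kappa> j) r c * d (j, r)))"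
    unfolding ip_def ASt_def by (intro sum.cong) (auto simp: sum_distrib_left algebra_simps)
  also have "\<dots> = (- (\<alpha> / real b)) * (\<Sum>c<n. \<Sum>j<b. \<Sum>r<m (\<kappa> j). p c * A (\<kappa> j) r c * d (j, r))"
    by (simp add: sum_distrib_left)
  also have "(\<Sum>c<n. \<Sum>j<b. \<Sum>r<m (\<kappa> j). p c * A (\<kappa> j) r c * d (j, r))
      = (\<Sum>j<b. \<Sum>c<n. \<Sum>r<m (\<kappa> j). p c * A (\<kappa> j) r c * d (j, r))" by (rule sum.swap)
  also have "\<dots> = (\<Sum>j<b. \<Sum>r<m (\<kappa> j). \<Sum>c<n. p c * A (\<kappa> j) r c * d (j, r))"
    by (intro sum.cong refl sum.swap)
  also have "\<dots> = (\<Sum>j<b. \<Sum>r<m (\<kappa> j). matv (m (\<kappa> j)) n (A (\<kappa> j)) p r * d (j, r))"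
    unfolding matv_def by (intro sum.cong refl) (auto simp: sum_distrib_right sum_distrib_left mult_ac)
  finally show ?thesis .
qed

lemma US_split:
  "US n m A f \<gamma> \<phi> \<kappa> b \<alpha> x v \<xi> = (\<Sum>j<b. real_of_ereal (fstar m \<gamma> f (\<kappa> j) (blk \<xi> j)))
     + real b / \<alpha> * ((nrm {..<n} (zS n m A \<kappa> b \<alpha> x v \<xi>))\<^sup>2 / 2
        - real_of_ereal (env {..<n} (\<lambda>w. ereal \<alpha> * \<phi> w) (zS n m A \<kappa> b \<alpha> x v \<xi>)))"
  unfolding US_def by (simp add: algebra_simps)

lemma real_le_ereal: "X \<le> ereal r \<Longrightarrow> X > -\<infinity> \<Longrightarrow> real_of_ereal X \<le> r"
  by (cases X) auto

lemma arith5: "(St::real) \<le> t*S1 + (1-t)*S2 - t*(1-t)*P*(\<mu>/2) \<Longrightarrow> Gt \<le> t*G1 + (1-t)*G2 \<Longrightarrow> 0 \<le> c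
  \<Longrightarrow> Nt = t*N1 + (1-t)*N2 - t*(1-t)*P
  \<Longrightarrow> (St + c*Gt) - \<mu>/2*Nt \<le> t*((S1 + c*G1) - \<mu>/2*N1) + (1-t)*((S2 + c*G2) - \<mu>/2*N2)"
proof -
  assume h1: "St \<le> t*S1 + (1-t)*S2 - t*(1-t)*P*(\<mu>/2)" and h2: "Gt \<le> t*G1 + (1-t)*G2" and c: "0 \<le> c"
    and h4: "Nt = t*N1 + (1-t)*N2 - t*(1-t)*P"
  have "c * Gt \<le> c * (t*G1 + (1-t)*G2)" using h2 c by (rule mult_left_mono)
  moreover have "t*((S1 + c*G1) - \<mu>/2*N1) + (1-t)*((S2 + c*G2) - \<mu>/2*N2)
     = (t*S1 + (1-t)*S2 - t*(1-t)*P*(\<mu>/2)) + c * (t*G1 + (1-t)*G2) - \<mu>/2*Nt"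
    unfolding h4 by (simp add: field_simps)
  ultimately show ?thesis using h1 by linarith
qed





theorem proposition4p3:
  fixes N n b :: nat
    and m :: "nat \<Rightarrow> nat"
    and A :: "nat \<Rightarrow> nat \<Rightarrow> nat \<Rightarrow> real"
    and f :: "nat \<Rightarrow> (nat \<Rightarrow> real) \<Rightarrow> real"
    and L \<gamma> :: "nat \<Rightarrow> real"
    and \<phi> :: "(nat \<Rightarrow> real) \<Rightarrow> ereal"
    and \<alpha> :: real
    and x v :: "nat \<Rightarrow> real"
    and \<kappa> :: "nat \<Rightarrow> nat"
  assumes N_pos: "0 < N"
    and A1: "\<forall>i<N. 0 < L i \<and> lsmooth {..<m i} (L i) (f i) \<and> weakly_convex {..<m i} (\<gamma> i) (f i)"
    and A4: "\<forall>i<N. ess_diff {..<m i} (fstar m \<gamma> f i) \<and>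
               loc_lip_grad {..<m i} (fstar m \<gamma> f i) (rint {..<m i} (edom {..<m i} (fstar m \<gamma> f i)))"
    and phi: "proper_closed_convex {..<n} \<phi>"
    and alpha: "0 < \<alpha>"
    and x: "x \<in> vecs {..<n}" and v: "v \<in> vecs {..<n}"
    and kappa: "\<forall>j<b. \<kappa> j < N"
  shows "strongly_convex_on (blkI m \<kappa> b)
           {\<xi> \<in> vecs (blkI m \<kappa> b). \<forall>j<b. blk \<xi> j \<in> edom {..<m (\<kappa> j)} (fstar m \<gamma> f (\<kappa> j))}
           (Min ((\<lambda>i. 1 / (L i + \<gamma> i)) ` {..<N}))
           (US n m A f \<gamma> \<phi> \<kappa> b \<alpha> x v)
       \<and> (\<forall>\<xi> \<in> {\<xi> \<in> vecs (blkI m \<kappa> b). \<forall>j<b.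
              blk \<xi> j \<in> rint {..<m (\<kappa> j)} (edom {..<m (\<kappa> j)} (fstar m \<gamma> f (\<kappa> j)))}.
            has_grad (blkI m \<kappa> b) (US n m A f \<gamma> \<phi> \<kappa> b \<alpha> x v) (VS n m A f \<gamma> \<phi> \<kappa> b \<alpha> x v \<xi>) \<xi>)"
proof
  define \<mu> where "\<mu> = Min ((\<lambda>i. 1 / (L i + \<gamma> i)) ` {..<N})"
  let ?Ib = "blkI m \<kappa> b"
  let ?g = "\<lambda>w. ereal \<alpha> * \<phi> w"
  let ?F = "\<lambda>j. fstar m \<gamma> f (\<kappa> j)"
  let ?z = "zS n m A \<kappa> b \<alpha> x v"
  let ?G = "\<lambda>z. (nrm {..<n} z)\<^sup>2 / 2 - real_of_ereal (env {..<n} ?g z)"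
  have finn: "finite {..<n::nat}" by simp
  have Kp: "0 < L (\<kappa> j) + \<gamma> (\<kappa> j)" and muK: "\<mu> \<le> 1 / (L (\<kappa> j) + \<gamma> (\<kappa> j))"
    and desc: "\<forall>z\<in>vecs {..<m (\<kappa> j)}. \<exists>g. \<forall>w\<in>vecs {..<m (\<kappa> j)}.
        fhat {..<m (\<kappa> j)} (\<gamma> (\<kappa> j)) (f (\<kappa> j)) w \<le> fhat {..<m (\<kappa> j)} (\<gamma> (\<kappa> j)) (f (\<kappa> j)) z
          + ip {..<m (\<kappa> j)} g (vsub w z) + (L (\<kappa> j) + \<gamma> (\<kappa> j)) / 2 * (nrm {..<m (\<kappa> j)} (vsub w z))\<^sup>2"
    if j: "j < b" for j
  proof -
    have i: "\<kappa> j < N" using kappa j by blast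
    have L: "0 < L (\<kappa> j)" and ls: "lsmooth {..<m (\<kappa> j)} (L (\<kappa> j)) (f (\<kappa> j))"
      and wc: "weakly_convex {..<m (\<kappa> j)} (\<gamma> (\<kappa> j)) (f (\<kappa> j))" using A1 i by auto
    have "0 \<le> \<gamma> (\<kappa> j)" using wc unfolding weakly_convex_def by blast
    thus "0 < L (\<kappa> j) + \<gamma> (\<kappa> j)" using L by linarith
    show "\<mu> \<le> 1 / (L (\<kappa> j) + \<gamma> (\<kappa> j))" unfolding \<mu>_def using i by (intro Min_le) auto
    show "\<forall>z\<in>vecs {..<m (\<kappa> j)}. \<exists>g. \<forall>w\<in>vecs {..<m (\<kappa> j)}.
        fhat {..<m (\<kappa> j)} (\<gamma> (\<kappa> j)) (f (\<kappa> j)) w \<le> fhat {..<m (\<kappa> j)} (\<gamma> (\<kappa> j)) (f (\<kappa> j)) z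
          + ip {..<m (\<kappa> j)} g (vsub w z) + (L (\<kappa> j) + \<gamma> (\<kappa> j)) / 2 * (nrm {..<m (\<kappa> j)} (vsub w z))\<^sup>2"
      using fhat_descent[OF _ ls] by blast
  qed
  show "strongly_convex_on ?Ib
           {\<xi> \<in> vecs ?Ib. \<forall>j<b. blk \<xi> j \<in> edom {..<m (\<kappa> j)} (?F j)}
           (Min ((\<lambda>i. 1 / (L i + \<gamma> i)) ` {..<N})) (US n m A f \<gamma> \<phi> \<kappa> b \<alpha> x v)"
    unfolding strongly_convex_on_def convex_fn_def \<mu>_def[symmetric]
  proof (intro ballI allI impI)
    fix \<xi>1 \<xi>2 and t :: real
    assume \<xi>1: "\<xi>1 \<in> {\<xi> \<in> vecs ?Ib. \<forall>j<b. blk \<xi> j \<in> edom {..<m (\<kappa> j)} (?F j)}"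
      and \<xi>2: "\<xi>2 \<in> {\<xi> \<in> vecs ?Ib. \<forall>j<b. blk \<xi> j \<in> edom {..<m (\<kappa> j)} (?F j)}"
      and t: "0 \<le> t \<and> t \<le> 1"
    let ?\<xi>t = "\<lambda>a. t * \<xi>1 a + (1 - t) * \<xi>2 a"
    define P where "P = (nrm ?Ib (vsub \<xi>1 \<xi>2))\<^sup>2"
    have blk_ineq: "real_of_ereal (?F j (blk ?\<xi>t j)) \<le> t * real_of_ereal (?F j (blk \<xi>1 j)) + (1 - t) * real_of_ereal (?F j (blk \<xi>2 j))
        - t * (1 - t) * (nrm {..<m (\<kappa> j)} (vsub (blk \<xi>1 j) (blk \<xi>2 j)))\<^sup>2 * (\<mu> / 2)" if j: "j < b" for j
    proof -
      let ?Ij = "{..<m (\<kappa> j)}"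
      let ?K = "L (\<kappa> j) + \<gamma> (\<kappa> j)"
      let ?Nj = "(nrm ?Ij (vsub (blk \<xi>1 j) (blk \<xi>2 j)))\<^sup>2"
      have y1: "blk \<xi>1 j \<in> vecs ?Ij" "?F j (blk \<xi>1 j) < \<infinity>" using \<xi>1 j unfolding edom_def by auto
      have y2: "blk \<xi>2 j \<in> vecs ?Ij" "?F j (blk \<xi>2 j) < \<infinity>" using \<xi>2 j unfolding edom_def by auto
      note cs = conj_sc[OF _ Kp[OF j] desc[OF j], of "blk \<xi>1 j" "blk \<xi>2 j" t, folded fstar_def]
      have up: "?F j (blk ?\<xi>t j) \<le> ereal (t * real_of_ereal (?F j (blk \<xi>1 j)) + (1 - t) * real_of_ereal (?F j (blk \<xi>2 j))
          - t * (1 - t) / (2 * ?K) * ?Nj)"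
        unfolding blk_lin using cs y1 y2 t unfolding fstar_def by simp
      have gt: "?F j (blk ?\<xi>t j) > -\<infinity>" unfolding fstar_def by (rule conj_gt[OF zero_vecs])
      have "t * (1 - t) * ?Nj * (\<mu> / 2) \<le> t * (1 - t) * ?Nj * (1 / (2 * ?K))"
      proof -
        have "\<mu> / 2 \<le> (1 / ?K) / 2" using muK[OF j] by (rule divide_right_mono) simp
        also have "\<dots> = 1 / (2 * ?K)" by simp
        finally have "\<mu> / 2 \<le> 1 / (2 * ?K)" .
        thus ?thesis using t by (intro mult_left_mono) auto
      qed
      moreover have "t * (1 - t) / (2 * ?K) * ?Nj = t * (1 - t) * ?Nj * (1 / (2 * ?K))" by simp
      ultimately show ?thesis using real_le_ereal[OF up gt] by linarith
    qed
    have S: "(\<Sum>j<b. real_of_ereal (?F j (blk ?\<xi>t j))) \<le> t * (\<Sum>j<b. real_of_ereal (?F j (blk \<xi>1 j)))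
        + (1 - t) * (\<Sum>j<b. real_of_ereal (?F j (blk \<xi>2 j))) - t * (1 - t) * P * (\<mu> / 2)"
    proof -
      have "(\<Sum>j<b. real_of_ereal (?F j (blk ?\<xi>t j))) \<le> (\<Sum>j<b. t * real_of_ereal (?F j (blk \<xi>1 j)) + (1 - t) * real_of_ereal (?F j (blk \<xi>2 j))
        - t * (1 - t) * (nrm {..<m (\<kappa> j)} (vsub (blk \<xi>1 j) (blk \<xi>2 j)))\<^sup>2 * (\<mu> / 2))"
        by (intro sum_mono blk_ineq) auto
      also have "\<dots> = t * (\<Sum>j<b. real_of_ereal (?F j (blk \<xi>1 j))) + (1 - t) * (\<Sum>j<b. real_of_ereal (?F j (blk \<xi>2 j)))
          - t * (1 - t) * (\<Sum>j<b. (nrm {..<m (\<kappa> j)} (vsub (blk \<xi>1 j) (blk \<xi>2 j)))\<^sup>2) * (\<mu> / 2)"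
        by (simp add: sum.distrib sum_subtractf sum_distrib_left sum_distrib_right)
      also have "(\<Sum>j<b. (nrm {..<m (\<kappa> j)} (vsub (blk \<xi>1 j) (blk \<xi>2 j)))\<^sup>2) = P"
        unfolding P_def nrm_blk_sq blk_vsub ..
      finally show ?thesis .
    qed
    have z1: "?z \<xi>1 \<in> vecs {..<n}" and z2: "?z \<xi>2 \<in> vecs {..<n}" using zS_vecs[OF x v] by auto
    have G: "?G (?z ?\<xi>t) \<le> t * ?G (?z \<xi>1) + (1 - t) * ?G (?z \<xi>2)"
      unfolding zS_lin using G_cvx[OF finn phi alpha z1 z2] t by blast
    have Nt: "(nrm ?Ib ?\<xi>t)\<^sup>2 = t * (nrm ?Ib \<xi>1)\<^sup>2 + (1 - t) * (nrm ?Ib \<xi>2)\<^sup>2 - t * (1 - t) * P"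
      using nrm_cvx_id[OF blkI_fin[of m \<kappa> b], of t \<xi>1 \<xi>2 "\<lambda>a. 0"] unfolding vsub_zero P_def .
    have c: "0 \<le> real b / \<alpha>" using alpha by simp
    have R: "US n m A f \<gamma> \<phi> \<kappa> b \<alpha> x v ?\<xi>t - \<mu> / 2 * (nrm ?Ib ?\<xi>t)\<^sup>2
      \<le> t * (US n m A f \<gamma> \<phi> \<kappa> b \<alpha> x v \<xi>1 - \<mu> / 2 * (nrm ?Ib \<xi>1)\<^sup>2)
        + (1 - t) * (US n m A f \<gamma> \<phi> \<kappa> b \<alpha> x v \<xi>2 - \<mu> / 2 * (nrm ?Ib \<xi>2)\<^sup>2)"
      unfolding US_split by (rule arith5[OF S G c Nt])
    thus "ereal (US n m A f \<gamma> \<phi> \<kappa> b \<alpha> x v ?\<xi>t - \<mu> / 2 * (nrm ?Ib ?\<xi>t)\<^sup>2)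
      \<le> ereal t * ereal (US n m A f \<gamma> \<phi> \<kappa> b \<alpha> x v \<xi>1 - \<mu> / 2 * (nrm ?Ib \<xi>1)\<^sup>2)
        + ereal (1 - t) * ereal (US n m A f \<gamma> \<phi> \<kappa> b \<alpha> x v \<xi>2 - \<mu> / 2 * (nrm ?Ib \<xi>2)\<^sup>2)"
      by simp
  qed
  show "\<forall>\<xi> \<in> {\<xi> \<in> vecs ?Ib. \<forall>j<b. blk \<xi> j \<in> rint {..<m (\<kappa> j)} (edom {..<m (\<kappa> j)} (?F j))}.
            has_grad ?Ib (US n m A f \<gamma> \<phi> \<kappa> b \<alpha> x v) (VS n m A f \<gamma> \<phi> \<kappa> b \<alpha> x v \<xi>) \<xi>"
  proof
    fix \<xi> assume \<xi>: "\<xi> \<in> {\<xi> \<in> vecs ?Ib. \<forall>j<b. blk \<xi> j \<in> rint {..<m (\<kappa> j)} (edom {..<m (\<kappa> j)} (?F j))}"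
    have \<xi>v: "\<xi> \<in> vecs ?Ib" and int: "\<And>j. j < b \<Longrightarrow> blk \<xi> j \<in> rint {..<m (\<kappa> j)} (edom {..<m (\<kappa> j)} (?F j))"
      using \<xi> by auto
    let ?eg = "\<lambda>j. egrad {..<m (\<kappa> j)} (?F j) (blk \<xi> j)"
    have hgj: "has_grad {..<m (\<kappa> j)} (\<lambda>z. real_of_ereal (?F j z)) (?eg j) (blk \<xi> j)" if j: "j < b" for j
    proof -
      have "ess_diff {..<m (\<kappa> j)} (?F j)" using A4 kappa j by blast
      then obtain g where "has_grad {..<m (\<kappa> j)} (\<lambda>z. real_of_ereal (?F j z)) g (blk \<xi> j)"
        using int[OF j] unfolding ess_diff_def by blast
      thus ?thesis unfolding egrad_def grad_def
        by (rule someI[where P="\<lambda>g. has_grad {..<m (\<kappa> j)} (\<lambda>z. real_of_ereal (?F j z)) g (blk \<xi> j)"])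
    qed
    define p where "p = prox {..<n} ?g (?z \<xi>)"
    define K0 where "K0 = (\<Sum>c<n. \<Sum>j<b. \<Sum>r<m (\<kappa> j). \<bar>A (\<kappa> j) r c\<bar>)"
    define C2 where "C2 = real b * \<alpha> * K0\<^sup>2"
    have C2: "0 \<le> C2" unfolding C2_def using alpha by simp
    have zv: "?z \<xi> \<in> vecs {..<n}" using zS_vecs[OF x v] by auto
    have VSv: "VS n m A f \<gamma> \<phi> \<kappa> b \<alpha> x v \<xi> \<in> vecs ?Ib"
      unfolding vecs_def VS_def blkI_def by auto
    have VSval: "VS n m A f \<gamma> \<phi> \<kappa> b \<alpha> x v \<xi> (j, r) = ?eg j r - matv (m (\<kappa> j)) n (A (\<kappa> j)) p r"
      if "j < b" "r < m (\<kappa> j)" for j r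
      using that unfolding VS_def p_def by simp
    show "has_grad ?Ib (US n m A f \<gamma> \<phi> \<kappa> b \<alpha> x v) (VS n m A f \<gamma> \<phi> \<kappa> b \<alpha> x v \<xi>) \<xi>"
      unfolding has_grad_def
    proof (intro conjI VSv allI impI)
      fix e :: real assume e: "0 < e"
      define e1 where "e1 = e / (2 * (real b + 1))"
      have e1: "0 < e1" unfolding e1_def using e by simp
      have "\<forall>j\<in>{..<b}. \<exists>d>0. \<forall>z\<in>vecs {..<m (\<kappa> j)}. nrm {..<m (\<kappa> j)} (vsub z (blk \<xi> j)) < d \<longrightarrow>
          \<bar>real_of_ereal (?F j z) - real_of_ereal (?F j (blk \<xi> j)) - ip {..<m (\<kappa> j)} (?eg j) (vsub z (blk \<xi> j))\<bar>
            \<le> e1 * nrm {..<m (\<kappa> j)} (vsub z (blk \<xi> j))"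
        using hgj e1 unfolding has_grad_def by blast
      then obtain dd where dd: "\<And>j. j \<in> {..<b} \<Longrightarrow> dd j > 0 \<and> (\<forall>z\<in>vecs {..<m (\<kappa> j)}. nrm {..<m (\<kappa> j)} (vsub z (blk \<xi> j)) < dd j \<longrightarrow>
          \<bar>real_of_ereal (?F j z) - real_of_ereal (?F j (blk \<xi> j)) - ip {..<m (\<kappa> j)} (?eg j) (vsub z (blk \<xi> j))\<bar>
            \<le> e1 * nrm {..<m (\<kappa> j)} (vsub z (blk \<xi> j)))"
        by (metis bchoice)
      define \<delta>1 where "\<delta>1 = Min (insert 1 (dd ` {..<b}))"
      have \<delta>1: "0 < \<delta>1" unfolding \<delta>1_def using dd by (subst Min_gr_iff) auto
      have \<delta>1j: "\<delta>1 \<le> dd j" if "j < b" for j unfolding \<delta>1_def using that by (intro Min_le) auto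
      define \<delta>2 where "\<delta>2 = e / (2 * (C2 + 1))"
      have \<delta>2: "0 < \<delta>2" unfolding \<delta>2_def using e C2 by simp
      show "\<exists>d>0. \<forall>z\<in>vecs ?Ib. nrm ?Ib (vsub z \<xi>) < d \<longrightarrow>
          \<bar>US n m A f \<gamma> \<phi> \<kappa> b \<alpha> x v z - US n m A f \<gamma> \<phi> \<kappa> b \<alpha> x v \<xi> - ip ?Ib (VS n m A f \<gamma> \<phi> \<kappa> b \<alpha> x v \<xi>) (vsub z \<xi>)\<bar>
            \<le> e * nrm ?Ib (vsub z \<xi>)"
      proof (intro exI[of _ "min \<delta>1 \<delta>2"] conjI ballI impI)
        show "0 < min \<delta>1 \<delta>2" using \<delta>1 \<delta>2 by simp
        fix \<xi>' assume \<xi>'v: "\<xi>' \<in> vecs ?Ib" and close: "nrm ?Ib (vsub \<xi>' \<xi>) < min \<delta>1 \<delta>2"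
        define d where "d = vsub \<xi>' \<xi>"
        define N where "N = nrm ?Ib d"
        have N0: "0 \<le> N" unfolding N_def by simp
        define B where "B j = real_of_ereal (?F j (blk \<xi>' j)) - real_of_ereal (?F j (blk \<xi> j)) - ip {..<m (\<kappa> j)} (?eg j) (blk d j)" for j
        have Bj: "\<bar>B j\<bar> \<le> e1 * N" if j: "j < b" for j
        proof -
          have bv: "blk \<xi>' j \<in> vecs {..<m (\<kappa> j)}" by (rule blk_vecs[OF \<xi>'v j])
          have nb: "nrm {..<m (\<kappa> j)} (blk d j) \<le> N" unfolding N_def by (rule nrm_blk_le[OF j])
          have "nrm {..<m (\<kappa> j)} (vsub (blk \<xi>' j) (blk \<xi> j)) < dd j"
            using nb close \<delta>1j[OF j] unfolding blk_vsub[symmetric] d_def N_def by linarith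
          hence "\<bar>B j\<bar> \<le> e1 * nrm {..<m (\<kappa> j)} (blk d j)"
            using dd[of j] j bv unfolding B_def d_def blk_vsub by auto
          also have "\<dots> \<le> e1 * N" using nb e1 by (intro mult_left_mono) auto
          finally show ?thesis .
        qed
        have sumB: "\<bar>\<Sum>j<b. B j\<bar> \<le> e / 2 * N"
        proof -
          have "\<bar>\<Sum>j<b. B j\<bar> \<le> (\<Sum>j<b. \<bar>B j\<bar>)" by (rule sum_abs)
          also have "\<dots> \<le> (\<Sum>j<b. e1 * N)" by (intro sum_mono Bj) auto
          also have "\<dots> = real b * e1 * N" by simp
          also have "\<dots> \<le> e / 2 * N"
          proof -
            have "real b * e1 = e / 2 * (real b / (real b + 1))" unfolding e1_def by (simp add: field_simps)
            also have "\<dots> \<le> e / 2 * 1" using e by (intro mult_left_mono) auto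
            finally show ?thesis using N0 by (intro mult_right_mono) auto
          qed
          finally show ?thesis .
        qed
        define H where "H = ?G (?z \<xi>') - ?G (?z \<xi>) - ip {..<n} p (vsub (?z \<xi>') (?z \<xi>))"
        have z'v: "?z \<xi>' \<in> vecs {..<n}" using zS_vecs[OF x v] by auto
        have H: "\<bar>H\<bar> \<le> (nrm {..<n} (vsub (?z \<xi>') (?z \<xi>)))\<^sup>2"
          unfolding H_def p_def by (rule G_grad[OF finn phi alpha zv z'v])
        have nz: "nrm {..<n} (vsub (?z \<xi>') (?z \<xi>)) \<le> \<alpha> * K0 * N"
        proof -
          have "nrm {..<n} (vsub (?z \<xi>') (?z \<xi>)) = \<alpha> * nrm {..<n} (ASt n m A \<kappa> b d)"
            unfolding zS_vsub nrm_scale d_def using alpha by simp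
          also have "\<dots> \<le> \<alpha> * (K0 * N)" unfolding K0_def N_def using alpha by (intro mult_left_mono ASt_bound) auto
          finally show ?thesis by simp
        qed
        have K0: "0 \<le> K0" unfolding K0_def by (intro sum_nonneg) auto
        have HH: "real b / \<alpha> * \<bar>H\<bar> \<le> e / 2 * N"
        proof -
          have "\<bar>H\<bar> \<le> (\<alpha> * K0 * N)\<^sup>2"
            using H nz by (meson nrm_nonneg order.trans power_mono)
          hence "real b / \<alpha> * \<bar>H\<bar> \<le> real b / \<alpha> * (\<alpha> * K0 * N)\<^sup>2" using alpha by (intro mult_left_mono) auto
          also have "\<dots> = C2 * N * N" unfolding C2_def using alpha by (simp add: power2_eq_square field_simps)
          also have "\<dots> \<le> C2 * \<delta>2 * N"
          proof -
            have "N < \<delta>2" using close unfolding N_def d_def by simp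
            thus ?thesis using C2 N0 by (intro mult_right_mono mult_left_mono) auto
          qed
          also have "C2 * \<delta>2 \<le> e / 2"
          proof -
            have "C2 * \<delta>2 = e / 2 * (C2 / (C2 + 1))" unfolding \<delta>2_def by (simp add: field_simps)
            also have "\<dots> \<le> e / 2 * 1" using e C2 by (intro mult_left_mono) auto
            finally show ?thesis by simp
          qed
          hence "C2 * \<delta>2 * N \<le> e / 2 * N" using N0 by (rule mult_right_mono)
          finally show ?thesis .
        qed
        define W where "W = (\<Sum>j<b. \<Sum>r<m (\<kappa> j). matv (m (\<kappa> j)) n (A (\<kappa> j)) p r * d (j, r))"
        have ipV: "ip ?Ib (VS n m A f \<gamma> \<phi> \<kappa> b \<alpha> x v \<xi>) d = (\<Sum>j<b. ip {..<m (\<kappa> j)} (?eg j) (blk d j)) - W"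
        proof -
          have "ip ?Ib (VS n m A f \<gamma> \<phi> \<kappa> b \<alpha> x v \<xi>) d
              = (\<Sum>j<b. \<Sum>r<m (\<kappa> j). ?eg j r * d (j, r) - matv (m (\<kappa> j)) n (A (\<kappa> j)) p r * d (j, r))"
            unfolding ip_def sum_blkI by (intro sum.cong refl) (auto simp: VSval algebra_simps)
          thus ?thesis unfolding W_def ip_def blk_def by (simp add: sum_subtractf)
        qed
        have ipP: "real b / \<alpha> * ip {..<n} p (vsub (?z \<xi>') (?z \<xi>)) = - W"
        proof (cases "b = 0")
          case True thus ?thesis unfolding W_def by simp
        next
          case False
          have "ip {..<n} p (vsub (?z \<xi>') (?z \<xi>)) = - (\<alpha> / real b) * W"
            unfolding zS_vsub W_def d_def by (rule ipz)
          thus ?thesis using False alpha by simp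
        qed
        have eq: "US n m A f \<gamma> \<phi> \<kappa> b \<alpha> x v \<xi>' - US n m A f \<gamma> \<phi> \<kappa> b \<alpha> x v \<xi> - ip ?Ib (VS n m A f \<gamma> \<phi> \<kappa> b \<alpha> x v \<xi>) d
            = (\<Sum>j<b. B j) + real b / \<alpha> * H"
        proof -
          have "(\<Sum>j<b. B j) = (\<Sum>j<b. real_of_ereal (?F j (blk \<xi>' j))) - (\<Sum>j<b. real_of_ereal (?F j (blk \<xi> j)))
              - (\<Sum>j<b. ip {..<m (\<kappa> j)} (?eg j) (blk d j))"
            unfolding B_def by (simp add: sum_subtractf)
          moreover have "real b / \<alpha> * H = real b / \<alpha> * (?G (?z \<xi>') - ?G (?z \<xi>)) + W"
            unfolding H_def using ipP by (simp add: right_diff_distrib)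
          ultimately show ?thesis unfolding US_split ipV by (simp add: algebra_simps)
        qed
        have "\<bar>(\<Sum>j<b. B j) + real b / \<alpha> * H\<bar> \<le> \<bar>\<Sum>j<b. B j\<bar> + real b / \<alpha> * \<bar>H\<bar>"
          using alpha by (simp add: abs_mult order_trans[OF abs_triangle_ineq])
        also have "\<dots> \<le> e * N" using sumB HH by linarith
        finally show "\<bar>US n m A f \<gamma> \<phi> \<kappa> b \<alpha> x v \<xi>' - US n m A f \<gamma> \<phi> \<kappa> b \<alpha> x v \<xi> - ip ?Ib (VS n m A f \<gamma> \<phi> \<kappa> b \<alpha> x v \<xi>) (vsub \<xi>' \<xi>)\<bar>
            \<le> e * nrm ?Ib (vsub \<xi>' \<xi>)" unfolding eq[unfolded d_def] N_def d_def .
      qed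
    qed
  qed
qed


end
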